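(* Let $p\neq 0$ and $\sigma^2\in\{1,-1\}$, let $\sigma$ denote a square root of $\sigma^2$, and fix a choice of sign. Consider the 2D generalized Boussinesq potential equation $$v_{tt}-v_{xx}-(v_x^{p+1})_x\mp v_{xxxx}-\sigma^2 v_{yy}=0$$ for $v(x,y,t)$. (i) For arbitrary $p\neq 0$, the infinitesimal point symmetries of this equation are spanned by the following generators $\mathrm{X}=\xi^x\partial_x+\xi^y\partial_y+\tau\partial_t+\eta\partial_v$: 1. $\tau=0,\ \xi^x=1,\ \xi^y=0,\ \eta=0$; 2. $\tau=0,\ \xi^x=0,\ \xi^y=1,\ \eta=0$; 3. $\tau=1,\ \xi^x=0,\ \xi^y=0,\ \eta=0$; 4. $\tau=y,\ \xi^x=0,\ \xi^y=\sigma^2 t,\ \eta=0$; 5. $\tau=0,\ \xi^x=0,\ \xi^y=0,\ \eta=f_1(y+\sigma t)+f_2(y-\sigma t)$, where $f_1,f_2$ are arbitrary functions of one variable (this corresponds to the general solution $P(y,t)$ of $P_{tt}-\sigma^2P_{yy}=0$). Generators 1–3 are translations, and 4 is a boost in the $(y,t)$-plane. (ii) Additional point symmetries are admitted only when $p=1$. They are given by the scaling combined with a shift in $v$ $$\tau=2t,\qquad \xi^x=x,\qquad \xi^y=2y,\qquad \eta=-(v+x).$$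
   Context: An infinitesimal point symmetry of a PDE for $v(x,y,t)$ is a vector field $\mathrm{X}=\xi^x(x,y,t,v)\partial_x+\xi^y(x,y,t,v)\partial_y+\tau(x,y,t,v)\partial_t+\eta(x,y,t,v)\partial_v$ whose prolongation leaves the equation invariant. Its characteristic is $P=\eta-\xi^x v_x-\xi^y v_y-\tau v_t$. The sign $\mp$ in the equation is fixed but arbitrary; it is the opposite of the sign $\pm$ multiplying $u_{xxxx}$ in the original equation $u_{tt}=u_{xx}+(u^{p+1})_{xx}\pm u_{xxxx}+\sigma^2u_{yy}$, where $u=v_x$. *)

theory Defs
  imports "HOL-Analysis.Analysis"
begin

type_synonym R3 = "real \<times> real \<times> real"            (* (x, y, t) *)
type_synonym R4 = "real \<times> real \<times> real \<times> real"   (* (x, y, t, v) *)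

definition pdir :: "'a::real_normed_vector \<Rightarrow> ('a \<Rightarrow> real) \<Rightarrow> 'a \<Rightarrow> real" where
  "pdir b f z = deriv (\<lambda>s. f (z + s *\<^sub>R b)) 0"

definition Dlist :: "'a::real_normed_vector list \<Rightarrow> ('a \<Rightarrow> real) \<Rightarrow> 'a \<Rightarrow> real" where
  "Dlist bs f = foldr pdir bs f"

definition smoothC :: "('a::euclidean_space \<Rightarrow> real) \<Rightarrow> bool" where
  "smoothC f \<longleftrightarrow> (\<forall>bs. set bs \<subseteq> Basis \<longrightarrow> (\<forall>z. Dlist bs f differentiable (at z)))"

definition ex :: R3 where "ex = (1, 0, 0)"
definition ey :: R3 where "ey = (0, 1, 0)"
definition et :: R3 where "et = (0, 0, 1)"

text \<open>A point vector field X = xi^x d_x + xi^y d_y + tau d_t + eta d_v,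
  stored as the tuple (xi^x, xi^y, tau, eta) of functions of (x,y,t,v).\<close>
type_synonym vf = "(R4 \<Rightarrow> real) \<times> (R4 \<Rightarrow> real) \<times> (R4 \<Rightarrow> real) \<times> (R4 \<Rightarrow> real)"

definition xiX :: "vf \<Rightarrow> R4 \<Rightarrow> real" where "xiX X = fst X"
definition xiY :: "vf \<Rightarrow> R4 \<Rightarrow> real" where "xiY X = fst (snd X)"
definition tauT :: "vf \<Rightarrow> R4 \<Rightarrow> real" where "tauT X = fst (snd (snd X))"
definition etaV :: "vf \<Rightarrow> R4 \<Rightarrow> real" where "etaV X = snd (snd (snd X))"

definition smooth_vf :: "vf \<Rightarrow> bool" where
  "smooth_vf X \<longleftrightarrow> smoothC (xiX X) \<and> smoothC (xiY X) \<and> smoothC (tauT X) \<and> smoothC (etaV X)"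

definition vadd :: "vf \<Rightarrow> vf \<Rightarrow> vf" where
  "vadd X Y = ((\<lambda>w. xiX X w + xiX Y w), (\<lambda>w. xiY X w + xiY Y w),
               (\<lambda>w. tauT X w + tauT Y w), (\<lambda>w. etaV X w + etaV Y w))"

definition vscale :: "real \<Rightarrow> vf \<Rightarrow> vf" where
  "vscale c X = ((\<lambda>w. c * xiX X w), (\<lambda>w. c * xiY X w), (\<lambda>w. c * tauT X w), (\<lambda>w. c * etaV X w))"

definition graphpt :: "(R3 \<Rightarrow> real) \<Rightarrow> R3 \<Rightarrow> R4" where
  "graphpt u z = (fst z, fst (snd z), snd (snd z), u z)"

definition charQ :: "vf \<Rightarrow> (R3 \<Rightarrow> real) \<Rightarrow> R3 \<Rightarrow> real" where
  "charQ X u z = etaV X (graphpt u z) - xiX X (graphpt u z) * pdir ex u z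
                 - xiY X (graphpt u z) * pdir ey u z - tauT X (graphpt u z) * pdir et u z"

definition etaJ :: "vf \<Rightarrow> (R3 \<Rightarrow> real) \<Rightarrow> R3 list \<Rightarrow> R3 \<Rightarrow> real" where
  "etaJ X u J z = Dlist J (charQ X u) z
      + xiX X (graphpt u z) * Dlist (J @ [ex]) u z
      + xiY X (graphpt u z) * Dlist (J @ [ey]) u z
      + tauT X (graphpt u z) * Dlist (J @ [et]) u z"

text \<open>The equation v_tt - v_xx - (v_x^(p+1))_x - e v_xxxx - sigma^2 v_yy = 0
  (e in {1,-1} encodes the sign -+), with (v_x^(p+1))_x = (p+1) v_x^p v_xx.\<close>
definition Delta :: "real \<Rightarrow> real \<Rightarrow> real \<Rightarrow> (R3 \<Rightarrow> real) \<Rightarrow> R3 \<Rightarrow> real" where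
  "Delta p s2 e u z =
     Dlist [et, et] u z - Dlist [ex, ex] u z
     - (p + 1) * (Dlist [ex] u z powr p) * Dlist [ex, ex] u z
     - e * Dlist [ex, ex, ex, ex] u z - s2 * Dlist [ey, ey] u z"

definition prDelta :: "real \<Rightarrow> real \<Rightarrow> real \<Rightarrow> vf \<Rightarrow> (R3 \<Rightarrow> real) \<Rightarrow> R3 \<Rightarrow> real" where
  "prDelta p s2 e X u z =
     etaJ X u [et, et] z - etaJ X u [ex, ex] z
     - (p + 1) * (Dlist [ex] u z powr p) * etaJ X u [ex, ex] z
     - (p + 1) * p * (Dlist [ex] u z powr (p - 1)) * Dlist [ex, ex] u z * etaJ X u [ex] z
     - e * etaJ X u [ex, ex, ex, ex] z - s2 * etaJ X u [ey, ey] z"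

text \<open>Infinitesimal invariance criterion: pr X Delta = 0 whenever Delta = 0, on jet space
  (domain v_x > 0, where v_x^p is defined for real p). Every 4-jet is the jet of a
  smooth (polynomial) function u at a point, so we quantify over u and points z.\<close>
definition is_point_symmetry :: "real \<Rightarrow> real \<Rightarrow> real \<Rightarrow> vf \<Rightarrow> bool" where
  "is_point_symmetry p s2 e X \<longleftrightarrow>
     (\<forall>u z. smoothC u \<longrightarrow> Dlist [ex] u z > 0 \<longrightarrow> Delta p s2 e u z = 0 \<longrightarrow> prDelta p s2 e X u z = 0)"

definition gen1 :: vf where "gen1 = ((\<lambda>_. 1), (\<lambda>_. 0), (\<lambda>_. 0), (\<lambda>_. 0))"
definition gen2 :: vf where "gen2 = ((\<lambda>_. 0), (\<lambda>_. 1), (\<lambda>_. 0), (\<lambda>_. 0))"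
definition gen3 :: vf where "gen3 = ((\<lambda>_. 0), (\<lambda>_. 0), (\<lambda>_. 1), (\<lambda>_. 0))"
definition gen4 :: "real \<Rightarrow> vf" where
  "gen4 s2 = ((\<lambda>_. 0), (\<lambda>(x,y,t,v). s2 * t), (\<lambda>(x,y,t,v). y), (\<lambda>_. 0))"
definition gen5 :: "(real \<times> real \<Rightarrow> real) \<Rightarrow> vf" where
  "gen5 P = ((\<lambda>_. 0), (\<lambda>_. 0), (\<lambda>_. 0), (\<lambda>(x,y,t,v). P (y, t)))"
definition gen_scal :: vf where
  "gen_scal = ((\<lambda>(x,y,t,v). x), (\<lambda>(x,y,t,v). 2 * y), (\<lambda>(x,y,t,v). 2 * t), (\<lambda>(x,y,t,v). - (v + x)))"

definition wave_sol :: "real \<Rightarrow> (real \<times> real \<Rightarrow> real) \<Rightarrow> bool" where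
  "wave_sol s2 P \<longleftrightarrow> smoothC P \<and>
     (\<forall>z. Dlist [(0,1), (0,1)] P z - s2 * Dlist [(1,0), (1,0)] P z = 0)"

end

theory Submission
  imports Defs
begin


definition L :: "'a::real_normed_vector \<Rightarrow> ('a \<Rightarrow> real) \<Rightarrow> 'a \<Rightarrow> real \<Rightarrow> real" where
  "L d f z = (\<lambda>s. f (z + s *\<^sub>R d))"

lemma Dlist_Nil[simp]: "Dlist [] f = f" by (simp add: Dlist_def)
lemma Dlist_Cons[simp]: "Dlist (b#bs) f = pdir b (Dlist bs f)" by (simp add: Dlist_def)
lemma Dlist_append: "Dlist (xs@ys) f = Dlist xs (Dlist ys f)" by (simp add: Dlist_def)

lemma deriv_shift0: "deriv g s = deriv (\<lambda>r. g (s + r)) 0"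
proof -
  have "\<And>D. DERIV g s :> D \<longleftrightarrow> DERIV (\<lambda>r. g (s + r)) 0 :> D"
    using DERIV_shift[of g _ 0 s] by (simp add: add.commute)
  then show ?thesis unfolding deriv_def by simp
qed

lemma pdir_line: "pdir d f (z + s *\<^sub>R d) = deriv (L d f z) s"
proof -
  have "deriv (L d f z) s = deriv (\<lambda>r. L d f z (s + r)) 0" by (rule deriv_shift0)
  also have "(\<lambda>r. L d f z (s + r)) = (\<lambda>r. f (z + s *\<^sub>R d + r *\<^sub>R d))"
    by (simp add: L_def scaleR_add_left add.assoc)
  finally show ?thesis by (simp add: pdir_def)
qed

lemma Dlist_rep_line: "L d (Dlist (replicate k d) f) z = (deriv ^^ k) (L d f z)"
proof (induction k)
  case 0 then show ?case by (simp add: L_def)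
next
  case (Suc k)
  have "L d (Dlist (replicate (Suc k) d) f) z = (\<lambda>s. pdir d (Dlist (replicate k d) f) (z + s *\<^sub>R d))"
    by (simp add: L_def)
  also have "\<dots> = (\<lambda>s. deriv (L d (Dlist (replicate k d) f) z) s)"
    by (simp only: pdir_line)
  also have "\<dots> = deriv ((deriv ^^ k) (L d f z))"
    using Suc by simp
  finally show ?case by simp
qed

lemma Dlist_rep: "Dlist (replicate k d) f z = (deriv ^^ k) (L d f z) 0"
  using fun_cong[OF Dlist_rep_line[of d k f z], of 0] by (simp add: L_def)

lemma pdir_has_derivative:
  assumes "(h has_derivative h') (at z)"
  shows "pdir d h z = h' d"
proof -
  have lin: "linear h'" using assms has_derivative_linear by blast
  have "((\<lambda>s. z + s *\<^sub>R d) has_derivative (\<lambda>s. s *\<^sub>R d)) (at 0)"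
    by (auto intro!: derivative_eq_intros)
  then have D: "((\<lambda>s. h (z + s *\<^sub>R d)) has_derivative (\<lambda>s. h' (s *\<^sub>R d))) (at 0)"
    using has_derivative_compose[of "\<lambda>s. z + s *\<^sub>R d" _ 0 UNIV h h'] assms by simp
  have eq: "(\<lambda>s. h' (s *\<^sub>R d)) = (*) (h' d)"
    using lin by (auto simp: linear_scale mult.commute)
  have "((\<lambda>s. h (z + s *\<^sub>R d)) has_derivative (*) (h' d)) (at 0)"
    using D eq by metis
  then have "DERIV (\<lambda>s. h (z + s *\<^sub>R d)) 0 :> h' d"
    by (simp add: has_field_derivative_def)
  then show ?thesis unfolding pdir_def by (rule DERIV_imp_deriv)
qed

lemma pdir_frechet:
  assumes "h differentiable (at z)"
  shows "pdir d h z = frechet_derivative h (at z) d"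
  using assms pdir_has_derivative frechet_derivative_works by blast

lemma pdir_lin_dir:
  assumes "h differentiable (at z)"
  shows "pdir (d1 + c *\<^sub>R d2) h z = pdir d1 h z + c * pdir d2 h z"
proof -
  have "linear (frechet_derivative h (at z))"
    using assms frechet_derivative_works has_derivative_linear by blast
  then show ?thesis using assms by (simp add: pdir_frechet linear_add linear_scale)
qed

lemma pdir_euclid:
  fixes h :: "'a::euclidean_space \<Rightarrow> real"
  assumes "h differentiable (at z)"
  shows "pdir d h z = (\<Sum>b\<in>Basis. (d \<bullet> b) * pdir b h z)"
proof -
  let ?h' = "frechet_derivative h (at z)"
  have lin: "linear ?h'"
    using assms frechet_derivative_works has_derivative_linear by blast
  have "?h' d = ?h' (\<Sum>b\<in>Basis. (d \<bullet> b) *\<^sub>R b)" by (simp add: euclidean_representation)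
  also have "\<dots> = (\<Sum>b\<in>Basis. (d \<bullet> b) * ?h' b)"
    using lin by (simp add: linear_sum linear_scale)
  finally show ?thesis using assms by (simp add: pdir_frechet)
qed

lemma pdir_add:
  assumes "f differentiable (at z)" "g differentiable (at z)"
  shows "pdir d (\<lambda>w. f w + g w) z = pdir d f z + pdir d g z"
proof -
  obtain f' g' where fg: "(f has_derivative f') (at z)" "(g has_derivative g') (at z)"
    using assms by (auto simp: differentiable_def)
  have "((\<lambda>w. f w + g w) has_derivative (\<lambda>h. f' h + g' h)) (at z)"
    using has_derivative_add[OF fg] by simp
  then show ?thesis using pdir_has_derivative[OF fg(1)] pdir_has_derivative[OF fg(2)]
    pdir_has_derivative by metis
qed

lemma pdir_scale:
  assumes "f differentiable (at z)"
  shows "pdir d (\<lambda>w. c * f w) z = c * pdir d f z"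
proof -
  obtain f' where f: "(f has_derivative f') (at z)"
    using assms by (auto simp: differentiable_def)
  have "((\<lambda>w. c * f w) has_derivative (\<lambda>h. c * f' h)) (at z)"
    using has_derivative_mult_right[OF f] by simp
  then show ?thesis using pdir_has_derivative[OF f] pdir_has_derivative by metis
qed

lemma pdir_mult:
  assumes "f differentiable (at z)" "g differentiable (at z)"
  shows "pdir d (\<lambda>w. f w * g w) z = pdir d f z * g z + f z * pdir d g z"
proof -
  obtain f' g' where fg: "(f has_derivative f') (at z)" "(g has_derivative g') (at z)"
    using assms by (auto simp: differentiable_def)
  have "((\<lambda>w. f w * g w) has_derivative (\<lambda>h. f z * g' h + f' h * g z)) (at z)"
    using has_derivative_mult[OF fg] by simp
  then have "pdir d (\<lambda>w. f w * g w) z = f z * g' d + f' d * g z"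
    by (rule pdir_has_derivative)
  then show ?thesis using pdir_has_derivative[OF fg(1)] pdir_has_derivative[OF fg(2)]
    by (simp add: mult.commute)
qed

lemma pdir_const[simp]: "pdir d (\<lambda>w. c) z = 0"
  unfolding pdir_def by (rule DERIV_imp_deriv) simp


definition smoothD :: "('a::euclidean_space \<Rightarrow> real) \<Rightarrow> bool" where
  "smoothD f \<longleftrightarrow> (\<forall>ds z. Dlist ds f differentiable (at z))"

inductive_set LC :: "('a::euclidean_space \<Rightarrow> real) \<Rightarrow> ('a \<Rightarrow> real) set" for f where
  LC_D: "set bs \<subseteq> Basis \<Longrightarrow> Dlist bs f \<in> LC f"
| LC_0: "(\<lambda>z. 0) \<in> LC f"
| LC_add: "g \<in> LC f \<Longrightarrow> h \<in> LC f \<Longrightarrow> (\<lambda>z. g z + h z) \<in> LC f"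
| LC_scale: "g \<in> LC f \<Longrightarrow> (\<lambda>z. c * g z) \<in> LC f"

lemma LC_diff: assumes "smoothC f" "g \<in> LC f" shows "g differentiable (at z)"
  using assms(2,1)
proof (induction g arbitrary: z rule: LC.induct)
  case (LC_D bs) then show ?case by (auto simp: smoothC_def)
qed auto

lemma LC_sum: "finite S \<Longrightarrow> (\<And>b. b \<in> S \<Longrightarrow> g b \<in> LC f) \<Longrightarrow> (\<lambda>z. \<Sum>b\<in>S. g b z) \<in> LC f"
proof (induction S rule: finite_induct)
  case empty then show ?case by (simp add: LC_0)
next
  case (insert x F) then show ?case by (simp add: LC_add)
qed

lemma LC_pdir: assumes "smoothC f" "g \<in> LC f" shows "pdir d g \<in> LC f"
  using assms(2,1)
proof (induction g rule: LC.induct)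
  case (LC_D bs)
  have "pdir d (Dlist bs f) = (\<lambda>z. \<Sum>b\<in>Basis. (d \<bullet> b) * Dlist (b#bs) f z)"
    using LC_D by (auto simp: smoothC_def pdir_euclid)
  moreover have "(\<lambda>z. \<Sum>b\<in>Basis. (d \<bullet> b) * Dlist (b#bs) f z) \<in> LC f"
    using LC_D by (intro LC_sum LC_scale) (auto intro!: LC.LC_D[of "_ # bs", simplified])
  ultimately show ?case by simp
next
  case LC_0 then show ?case by (simp add: LC.LC_0)
next
  case (LC_add g h)
  have dg: "\<And>z. g differentiable (at z)" "\<And>z. h differentiable (at z)"
    using LC_diff LC_add by auto
  have "pdir d (\<lambda>z. g z + h z) = (\<lambda>z. pdir d g z + pdir d h z)"
    by (simp add: pdir_add dg fun_eq_iff)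
  then show ?case using LC_add by (simp add: LC.LC_add)
next
  case (LC_scale g c)
  have dg: "\<And>z. g differentiable (at z)"
    using LC_diff LC_scale by auto
  have "pdir d (\<lambda>z. c * g z) = (\<lambda>z. c * pdir d g z)"
    by (simp add: pdir_scale dg fun_eq_iff)
  then show ?case using LC_scale by (simp add: LC.LC_scale)
qed

lemma smoothC_LC: "smoothC f \<Longrightarrow> Dlist ds f \<in> LC f"
proof (induction ds)
  case Nil then show ?case using LC_D[of "[]" f] by simp
next
  case (Cons d ds) then show ?case by (simp add: LC_pdir)
qed

lemma smoothC_smoothD: "smoothC f \<Longrightarrow> smoothD f"
  unfolding smoothD_def using smoothC_LC LC_diff by blast

lemma smoothD_smoothC: "smoothD f \<Longrightarrow> smoothC f"
  unfolding smoothD_def smoothC_def by blast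

lemma smoothD_diff: "smoothD f \<Longrightarrow> f differentiable (at z)"
  unfolding smoothD_def using Dlist_Nil by metis

lemma smoothD_Dlist: "smoothD f \<Longrightarrow> smoothD (Dlist ds f)"
  unfolding smoothD_def by (metis Dlist_append)

lemma smoothD_pdir: "smoothD f \<Longrightarrow> smoothD (pdir d f)"
  using smoothD_Dlist[of f "[d]"] by simp

lemma smoothD_add: "smoothD f \<Longrightarrow> smoothD g \<Longrightarrow> smoothD (\<lambda>z. f z + g z)"
proof -
  assume f: "smoothD f" and g: "smoothD g"
  have "\<forall>z. Dlist ds (\<lambda>z. f z + g z) z = Dlist ds f z + Dlist ds g z" for ds
  proof (induction ds)
    case Nil then show ?case by simp
  next
    case (Cons d ds)
    then have "Dlist ds (\<lambda>z. f z + g z) = (\<lambda>z. Dlist ds f z + Dlist ds g z)" by auto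
    then show ?case using f g by (simp add: smoothD_def pdir_add)
  qed
  then show ?thesis using f g unfolding smoothD_def
    by (metis (no_types, lifting) differentiable_add ext)
qed

lemma smoothD_scale: "smoothD f \<Longrightarrow> smoothD (\<lambda>z. c * f z)"
proof -
  assume f: "smoothD f"
  have "\<forall>z. Dlist ds (\<lambda>z. c * f z) z = c * Dlist ds f z" for ds
  proof (induction ds)
    case Nil then show ?case by simp
  next
    case (Cons d ds)
    then have "Dlist ds (\<lambda>z. c * f z) = (\<lambda>z. c * Dlist ds f z)" by auto
    then show ?case using f by (simp add: smoothD_def pdir_scale)
  qed
  then show ?thesis using f unfolding smoothD_def
    by (metis (no_types, lifting) differentiable_mult differentiable_const ext)
qed

lemma smoothD_const: "smoothD (\<lambda>z. c)"
proof -
  have *: "Dlist ds (\<lambda>z. c) = (\<lambda>z. if ds = [] then c else 0)" for ds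
    by (induction ds) simp_all
  show ?thesis unfolding smoothD_def * by simp
qed

definition smooth1 :: "(real \<Rightarrow> real) \<Rightarrow> bool" where
  "smooth1 f \<longleftrightarrow> (\<forall>k x. (deriv ^^ k) f differentiable (at x))"

lemma smooth1_D: "smooth1 f \<Longrightarrow> DERIV ((deriv ^^ k) f) x :> (deriv ^^ (Suc k)) f x"
  by (simp add: smooth1_def DERIV_deriv_iff_real_differentiable)

lemma hd_add: "smooth1 f \<Longrightarrow> smooth1 g \<Longrightarrow>
  (deriv ^^ n) (\<lambda>w. f w + g w) = (\<lambda>z. (deriv ^^ n) f z + (deriv ^^ n) g z)"
proof (induction n)
  case 0 then show ?case by simp
next
  case (Suc n)
  then have "(deriv ^^ Suc n) (\<lambda>w. f w + g w) = deriv (\<lambda>z. (deriv ^^ n) f z + (deriv ^^ n) g z)"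
    by simp
  also have "\<dots> = (\<lambda>z. (deriv ^^ Suc n) f z + (deriv ^^ Suc n) g z)"
    using Suc.prems by (intro ext DERIV_imp_deriv DERIV_add smooth1_D)
  finally show ?case .
qed

lemma hd_cmult: "smooth1 f \<Longrightarrow> (deriv ^^ n) (\<lambda>w. c * f w) = (\<lambda>z. c * (deriv ^^ n) f z)"
proof (induction n)
  case 0 then show ?case by simp
next
  case (Suc n)
  then have "(deriv ^^ Suc n) (\<lambda>w. c * f w) = deriv (\<lambda>z. c * (deriv ^^ n) f z)"
    by simp
  also have "\<dots> = (\<lambda>z. c * (deriv ^^ Suc n) f z)"
    using Suc.prems by (intro ext DERIV_imp_deriv DERIV_cmult smooth1_D)
  finally show ?case .
qed

lemma Suc_choose': "Suc n choose k = (n choose k) + (if k = 0 then 0 else (n choose (k-1)))"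
  by (cases k) simp_all

lemma sum_Suc_reindex':
  fixes f :: "nat \<Rightarrow> 'a::ab_group_add"
  shows "sum f {0..n} = f 0 - f (Suc n) + sum (\<lambda>i. f (Suc i)) {0..n}"
  by (induct n) auto

lemma hd_mult: "smooth1 f \<Longrightarrow> smooth1 g \<Longrightarrow>
  (deriv ^^ n) (\<lambda>w. f w * g w) =
    (\<lambda>z. \<Sum>i = 0..n. of_nat (n choose i) * (deriv ^^ i) f z * (deriv ^^ (n-i)) g z)"
proof (induction n)
  case 0 then show ?case by simp
next
  case (Suc n)
  show ?case
  proof
    fix z
    have *: "\<And>n. ((deriv ^^ n) f has_field_derivative (deriv ^^ Suc n) f z) (at z)"
            "\<And>n. ((deriv ^^ n) g has_field_derivative (deriv ^^ Suc n) g z) (at z)"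
      using Suc.prems smooth1_D by auto
    have sumeq: "(\<Sum>i = 0..n.
               of_nat (n choose i) * ((deriv ^^ Suc i) f z * (deriv ^^ (n-i)) g z + (deriv ^^ Suc (n-i)) g z * (deriv ^^ i) f z)) =
            g z * (deriv ^^ Suc n) f z + (\<Sum>i = 0..n. (deriv ^^ i) f z * (of_nat (Suc n choose i) * (deriv ^^ (Suc n - i)) g z))"
      apply (simp add: Suc_choose' algebra_simps sum.distrib)
      apply (subst (4) sum_Suc_reindex')
      apply (auto simp: algebra_simps Suc_diff_le intro: sum.cong)
      done
    have "((\<lambda>w. \<Sum>i = 0..n. of_nat (n choose i) * (deriv ^^ i) f w * (deriv ^^ (n-i)) g w) has_field_derivative
         (\<Sum>i = 0..Suc n. (Suc n choose i) * (deriv ^^ i) f z * (deriv ^^ (Suc n - i)) g z))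
        (at z)"
      apply (rule derivative_eq_intros | simp)+
      apply (auto intro: DERIV_mult *)
      apply (simp add: algebra_simps)
      using sumeq by (simp add: algebra_simps)
    then show "(deriv ^^ Suc n) (\<lambda>w. f w * g w) z =
      (\<Sum>i = 0..Suc n. of_nat (Suc n choose i) * (deriv ^^ i) f z * (deriv ^^ (Suc n - i)) g z)"
      using Suc.IH Suc.prems by (simp add: DERIV_imp_deriv)
  qed
qed


lemma smooth1_add[simp]: "smooth1 f \<Longrightarrow> smooth1 g \<Longrightarrow> smooth1 (\<lambda>s. f s + g s)"
  unfolding smooth1_def by (simp add: hd_add[unfolded smooth1_def])

lemma smooth1_cmult[simp]: "smooth1 f \<Longrightarrow> smooth1 (\<lambda>s. c * f s)"
  unfolding smooth1_def by (simp add: hd_cmult[unfolded smooth1_def])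

lemma smooth1_mult[simp]: "smooth1 f \<Longrightarrow> smooth1 g \<Longrightarrow> smooth1 (\<lambda>s. f s * g s)"
proof -
  assume f: "smooth1 f" and g: "smooth1 g"
  show ?thesis unfolding smooth1_def
  proof (intro allI)
    fix k x
    have "(\<lambda>z. \<Sum>i = 0..k. of_nat (k choose i) * (deriv ^^ i) f z * (deriv ^^ (k-i)) g z) differentiable (at x)"
      using f g unfolding smooth1_def by (intro differentiable_sum) (auto intro!: differentiable_mult)
    then show "(deriv ^^ k) (\<lambda>s. f s * g s) differentiable (at x)"
      using hd_mult[OF f g] by simp
  qed
qed

lemma hd_const[simp]: "(deriv ^^ n) (\<lambda>s. c) = (\<lambda>s. if n = 0 then c else 0)"
proof (induction n)
  case (Suc n) then show ?case by (auto intro!: ext DERIV_imp_deriv)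
qed simp

lemma smooth1_const[simp]: "smooth1 (\<lambda>s. c)"
  unfolding smooth1_def by simp

lemma prod_fact_aux: "(\<Prod>i<n. real (n - i)) = fact n"
proof (induction n)
  case (Suc n)
  have "(\<Prod>i<Suc n. real (Suc n - i)) = real (Suc n) * (\<Prod>i<n. real (Suc n - Suc i))"
    by (subst prod.lessThan_Suc_shift) simp
  also have "\<dots> = fact (Suc n)" using Suc by simp
  finally show ?case .
qed simp

lemma hd_pow_gen: "(deriv ^^ k) (\<lambda>s. s ^ n) = (\<lambda>s. (\<Prod>i<k. real (n - i)) * s ^ (n - k))"
proof (induction k)
  case 0 then show ?case by simp
next
  case (Suc k)
  have "(deriv ^^ Suc k) (\<lambda>s. s ^ n) = deriv (\<lambda>s. (\<Prod>i<k. real (n - i)) * s ^ (n - k))"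
    using Suc by simp
  also have "\<dots> = (\<lambda>s. (\<Prod>i<Suc k. real (n - i)) * s ^ (n - Suc k))"
  proof
    fix s :: real
    have "DERIV (\<lambda>s. (\<Prod>i<k. real (n - i)) * s ^ (n - k)) s :>
           (\<Prod>i<k. real (n - i)) * (real (n - k) * s ^ (n - k - Suc 0))"
      by (rule DERIV_cmult) (rule DERIV_pow)
    moreover have "(\<Prod>i<k. real (n - i)) * (real (n - k) * s ^ (n - k - Suc 0))
                 = (\<Prod>i<Suc k. real (n - i)) * s ^ (n - Suc k)"
      by (simp only: prod.lessThan_Suc diff_diff_left mult.assoc add_Suc_right add_0_right)
    ultimately show "deriv (\<lambda>s. (\<Prod>i<k. real (n - i)) * s ^ (n - k)) s =
        (\<Prod>i<Suc k. real (n - i)) * s ^ (n - Suc k)" by (metis DERIV_imp_deriv)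
  qed
  finally show ?case .
qed

lemma hd_pow0: "(deriv ^^ k) (\<lambda>s. s ^ n) 0 = (if k = n then fact n else (0::real))"
proof -
  have "(\<Prod>i<k. real (n - i)) * 0 ^ (n - k) = (if k = n then fact n else (0::real))"
  proof (cases "k = n")
    case True then show ?thesis using prod_fact_aux[of n] by simp
  next
    case False
    show ?thesis
    proof (cases "k < n")
      case True then show ?thesis using False by simp
    next
      case F: False
      then have "n \<in> {..<k}" using False by simp
      then have "(\<Prod>i<k. real (n - i)) = 0" by (intro prod_zero) auto
      then show ?thesis using False by simp
    qed
  qed
  then show ?thesis by (simp add: hd_pow_gen)
qed

lemma smooth1_pow[simp]: "smooth1 (\<lambda>s. s ^ n)"
  unfolding smooth1_def hd_pow_gen by (intro allI differentiable_mult differentiable_const differentiable_power differentiable_ident)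

lemma smooth1_ident[simp]: "smooth1 (\<lambda>s. s)"
  using smooth1_pow[of 1] by simp

lemma hd_ident0: "(deriv ^^ k) (\<lambda>s. s) 0 = (if k = 1 then 1 else (0::real))"
  using hd_pow0[of k 1] by simp

lemma smooth1_diff[simp]: "smooth1 f \<Longrightarrow> smooth1 g \<Longrightarrow> smooth1 (\<lambda>s. f s - g s)"
proof -
  assume f: "smooth1 f" and g: "smooth1 g"
  have "smooth1 (\<lambda>s. f s + (-1) * g s)" using f g by (intro smooth1_add smooth1_cmult)
  moreover have "(\<lambda>s. f s + (-1) * g s) = (\<lambda>s. f s - g s)" by simp
  ultimately show ?thesis by simp
qed

lemma hd_diff: assumes f: "smooth1 f" and g: "smooth1 g"
  shows "(deriv ^^ n) (\<lambda>w. f w - g w) = (\<lambda>z. (deriv ^^ n) f z - (deriv ^^ n) g z)"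
proof -
  have g': "smooth1 (\<lambda>s. (-1) * g s)" using g by (rule smooth1_cmult)
  have "(\<lambda>w. f w - g w) = (\<lambda>w. f w + (-1) * g w)" by simp
  then have "(deriv ^^ n) (\<lambda>w. f w - g w) = (\<lambda>z. (deriv ^^ n) f z + (deriv ^^ n) (\<lambda>s. (-1) * g s) z)"
    using hd_add[OF f g'] by simp
  also have "\<dots> = (\<lambda>z. (deriv ^^ n) f z - (deriv ^^ n) g z)"
    using hd_cmult[OF g, of n "-1"] by simp
  finally show ?thesis .
qed

lemma smooth1_L[simp]: "smoothD f \<Longrightarrow> smooth1 (L d f z)"
  unfolding smooth1_def
proof (intro allI)
  fix k x assume f: "smoothD f"
  have l: "(\<lambda>s. z + s *\<^sub>R d) differentiable (at x)"
    by (rule differentiable_add[OF differentiable_const differentiable_scaleR[OF differentiable_ident differentiable_const]])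
  have "(\<lambda>s. Dlist (replicate k d) f (z + s *\<^sub>R d)) differentiable (at x)"
    using f l unfolding smoothD_def by (metis differentiable_compose)
  then show "(deriv ^^ k) (L d f z) differentiable (at x)"
    using Dlist_rep_line[of d k f z] by (simp add: L_def)
qed

lemma hd_L0: "(deriv ^^ k) (L d f z) 0 = Dlist (replicate k d) f z"
  by (rule Dlist_rep[symmetric])


definition hdv :: "nat \<Rightarrow> (real \<Rightarrow> real) \<Rightarrow> real \<Rightarrow> real" where
  "hdv k f = (deriv ^^ k) f"

lemma hd0[simp]: "hdv 0 f x = f x" by (simp add: hdv_def)

lemma hdadd[simp]: "smooth1 f \<Longrightarrow> smooth1 g \<Longrightarrow> hdv n (\<lambda>w. f w + g w) x = hdv n f x + hdv n g x"
  by (simp add: hdv_def hd_add)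
lemma hddiff[simp]: "smooth1 f \<Longrightarrow> smooth1 g \<Longrightarrow> hdv n (\<lambda>w. f w - g w) x = hdv n f x - hdv n g x"
  by (simp add: hdv_def hd_diff)
lemma hdcmult[simp]: "smooth1 f \<Longrightarrow> hdv n (\<lambda>w. c * f w) x = c * hdv n f x"
  by (simp add: hdv_def hd_cmult)
lemma hdconst[simp]: "hdv n (\<lambda>s. c) x = (if n = 0 then c else 0)"
  by (simp add: hdv_def)
lemma hdpow0[simp]: "hdv k (\<lambda>s. s ^ n) 0 = (if k = n then fact n else 0)"
  by (simp add: hdv_def hd_pow0)
lemma hdident0[simp]: "hdv k (\<lambda>s. s) 0 = (if k = 1 then 1 else 0)"
  by (simp add: hdv_def hd_ident0)
lemma hdL0: "hdv k (L d f z) 0 = Dlist (replicate k d) f z"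
  by (simp add: hdv_def hd_L0)

lemma hdmult: "smooth1 f \<Longrightarrow> smooth1 g \<Longrightarrow> hdv n (\<lambda>w. f w * g w) x =
    (\<Sum>i = 0..n. of_nat (n choose i) * hdv i f x * hdv (n - i) g x)"
  unfolding hdv_def using hd_mult by simp

lemma set04: "{0..4::nat} = {0,1,2,3,4}" by auto
lemma set02: "{0..2::nat} = {0,1,2}" by auto
lemma set01: "{0..1::nat} = {0,1}" by auto
lemma ch4: "(4::nat) choose 1 = 4" "(4::nat) choose 2 = 6" "(4::nat) choose 3 = 4" "(4::nat) choose 4 = 1"
  "(2::nat) choose 1 = 2" "(2::nat) choose 2 = 1"
  by (simp_all add: numeral_eq_Suc)

lemma hdmult1[simp]: "smooth1 f \<Longrightarrow> smooth1 g \<Longrightarrow> hdv 1 (\<lambda>w. f w * g w) x =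
   hdv 1 f x * g x + f x * hdv 1 g x"
  by (simp add: hdmult set01)

lemma hdmult2[simp]: "smooth1 f \<Longrightarrow> smooth1 g \<Longrightarrow> hdv 2 (\<lambda>w. f w * g w) x =
   hdv 2 f x * g x + 2 * hdv 1 f x * hdv 1 g x + f x * hdv 2 g x"
  by (simp add: hdmult set02 ch4)

lemma hdmult4[simp]: "smooth1 f \<Longrightarrow> smooth1 g \<Longrightarrow> hdv 4 (\<lambda>w. f w * g w) x =
   hdv 4 f x * g x + 4 * hdv 3 f x * hdv 1 g x
   + 6 * hdv 2 f x * hdv 2 g x + 4 * hdv 1 f x * hdv 3 g x
   + f x * hdv 4 g x"
  by (simp add: hdmult set04 ch4)


lemma Dlist1: "Dlist [d] f z = hdv 1 (L d f z) 0" using hdL0[of 1 d f z] by simp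
lemma Dlist2: "Dlist [d,d] f z = hdv 2 (L d f z) 0" using hdL0[of 2 d f z] by (simp add: numeral_eq_Suc)
lemma Dlist3: "Dlist [d,d,d] f z = hdv 3 (L d f z) 0" using hdL0[of 3 d f z] by (simp add: numeral_eq_Suc)
lemma Dlist4: "Dlist [d,d,d,d] f z = hdv 4 (L d f z) 0" using hdL0[of 4 d f z] by (simp add: numeral_eq_Suc)

inductive_set P3 :: "(R3 \<Rightarrow> real) set" where
  P3_const: "(\<lambda>z. c) \<in> P3"
| P3_x: "(\<lambda>z. fst z) \<in> P3"
| P3_y: "(\<lambda>z. fst (snd z)) \<in> P3"
| P3_t: "(\<lambda>z. snd (snd z)) \<in> P3"
| P3_add: "f \<in> P3 \<Longrightarrow> g \<in> P3 \<Longrightarrow> (\<lambda>z. f z + g z) \<in> P3"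
| P3_mult: "f \<in> P3 \<Longrightarrow> g \<in> P3 \<Longrightarrow> (\<lambda>z. f z * g z) \<in> P3"

lemma hd_x: "((\<lambda>z::R3. fst z) has_derivative (\<lambda>h. fst h)) (at z)"
  by (auto intro!: derivative_eq_intros)
lemma hd_y: "((\<lambda>z::R3. fst (snd z)) has_derivative (\<lambda>h. fst (snd h))) (at z)"
  by (auto intro!: derivative_eq_intros)
lemma hd_t: "((\<lambda>z::R3. snd (snd z)) has_derivative (\<lambda>h. snd (snd h))) (at z)"
  by (auto intro!: derivative_eq_intros)

lemma P3_diff: "f \<in> P3 \<Longrightarrow> f differentiable (at z)"
proof (induction f arbitrary: z rule: P3.induct)
  case P3_x then show ?case using hd_x[of z] unfolding differentiable_def by blast
next
  case P3_y then show ?case using hd_y[of z] unfolding differentiable_def by blast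
next
  case P3_t then show ?case using hd_t[of z] unfolding differentiable_def by blast
qed auto

lemma P3_pdir: "f \<in> P3 \<Longrightarrow> pdir d f \<in> P3"
proof (induction f rule: P3.induct)
  case (P3_const c) then show ?case by (simp add: P3.P3_const)
next
  case P3_x
  have "pdir d (\<lambda>z. fst z) = (\<lambda>z. fst d)" by (rule ext, rule pdir_has_derivative[OF hd_x])
  then show ?case by (simp add: P3.P3_const)
next
  case P3_y
  have "pdir d (\<lambda>z. fst (snd z)) = (\<lambda>z. fst (snd d))" by (rule ext, rule pdir_has_derivative[OF hd_y])
  then show ?case by (simp add: P3.P3_const)
next
  case P3_t
  have "pdir d (\<lambda>z. snd (snd z)) = (\<lambda>z. snd (snd d))" by (rule ext, rule pdir_has_derivative[OF hd_t])
  then show ?case by (simp add: P3.P3_const)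
next
  case (P3_add f g)
  have "pdir d (\<lambda>z. f z + g z) = (\<lambda>z. pdir d f z + pdir d g z)"
    using P3_add by (simp add: pdir_add P3_diff fun_eq_iff)
  then show ?case using P3_add by (simp add: P3.P3_add)
next
  case (P3_mult f g)
  have "pdir d (\<lambda>z. f z * g z) = (\<lambda>z. pdir d f z * g z + f z * pdir d g z)"
    using P3_mult by (simp add: pdir_mult P3_diff fun_eq_iff)
  then show ?case using P3_mult by (simp add: P3.P3_add P3.P3_mult)
qed

lemma P3_smoothD: "f \<in> P3 \<Longrightarrow> smoothD f"
proof -
  assume f: "f \<in> P3"
  have "Dlist ds f \<in> P3" for ds by (induction ds) (auto simp: f P3_pdir)
  then show ?thesis unfolding smoothD_def by (auto intro: P3_diff)
qed

lemma P3_sub: "f \<in> P3 \<Longrightarrow> g \<in> P3 \<Longrightarrow> (\<lambda>z. f z - g z) \<in> P3"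
  using P3_add[of f "\<lambda>z. (-1) * g z"] P3_mult[of "\<lambda>z. -1" g] P3_const[of "-1"] by simp

lemma P3_pow: "f \<in> P3 \<Longrightarrow> (\<lambda>z. f z ^ n) \<in> P3"
  by (induction n) (auto intro: P3_mult P3_const)

lemmas P3_intros = P3_const P3_x P3_y P3_t P3_add P3_mult P3_sub P3_pow


definition DX :: "real \<Rightarrow> R4" where "DX a = (1,0,0,a)"
definition DY :: "real \<Rightarrow> R4" where "DY b = (0,1,0,b)"
definition DT :: "real \<Rightarrow> R4" where "DT c = (0,0,1,c)"
definition wpt :: "R3 \<Rightarrow> real \<Rightarrow> R4" where "wpt z0 v = (fst z0, fst (snd z0), snd (snd z0), v)"
definition dd :: "nat \<Rightarrow> R4 \<Rightarrow> (R4 \<Rightarrow> real) \<Rightarrow> R4 \<Rightarrow> real" where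
  "dd k D F w = Dlist (replicate k D) F w"

definition u1 :: "R3 \<Rightarrow> real \<Rightarrow> real \<Rightarrow> real \<Rightarrow> real \<Rightarrow> real \<Rightarrow> real \<Rightarrow> real \<Rightarrow> real \<Rightarrow> real \<Rightarrow> R3 \<Rightarrow> real" where
  "u1 z0 u0 a b c n1 n3 m1 m3 r = (\<lambda>z.
     u0 + a * (fst z - fst z0) + b * (fst (snd z) - fst (snd z0)) + c * (snd (snd z) - snd (snd z0))
     + n1 * ((fst z - fst z0) * (snd (snd z) - snd (snd z0)))
     + n3 / 6 * ((fst z - fst z0) ^ 3 * (snd (snd z) - snd (snd z0)))
     + m1 * ((fst z - fst z0) * (fst (snd z) - fst (snd z0)))
     + m3 / 6 * ((fst z - fst z0) ^ 3 * (fst (snd z) - fst (snd z0)))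
     + r * ((fst (snd z) - fst (snd z0)) * (snd (snd z) - snd (snd z0))))"

lemma u1_P3: "u1 z0 u0 a b c n1 n3 m1 m3 r \<in> P3"
  unfolding u1_def by (intro P3_intros)

lemma Dlist_single: "Dlist [d] f = pdir d f" by simp

definition P1 :: "real \<Rightarrow> real \<Rightarrow> real \<Rightarrow> vf \<Rightarrow> R3 \<Rightarrow> real \<Rightarrow> real \<Rightarrow> real \<Rightarrow> real \<Rightarrow> real \<Rightarrow> real \<Rightarrow> real \<Rightarrow> real \<Rightarrow> real \<Rightarrow> real" where
  "P1 p s2 e X z0 u0 a b c n1 n3 m1 m3 r =
    (let E = etaV X; A = xiX X; B = xiY X; C = tauT X; w = wpt z0 u0; T = DT c; XX = DX a; Y = DY b in
    (dd 2 T E w - a * dd 2 T A w - 2 * n1 * dd 1 T A w - b * dd 2 T B w - 2 * r * dd 1 T B w - c * dd 2 T C w)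
  - (1 + (p + 1) * a powr p) * (dd 2 XX E w - a * dd 2 XX A w - b * dd 2 XX B w - 2 * m1 * dd 1 XX B w
        - c * dd 2 XX C w - 2 * n1 * dd 1 XX C w)
  - e * (dd 4 XX E w - a * dd 4 XX A w - b * dd 4 XX B w - 4 * m1 * dd 3 XX B w - 4 * m3 * dd 1 XX B w
        - c * dd 4 XX C w - 4 * n1 * dd 3 XX C w - 4 * n3 * dd 1 XX C w)
  - s2 * (dd 2 Y E w - a * dd 2 Y A w - 2 * m1 * dd 1 Y A w - b * dd 2 Y B w - c * dd 2 Y C w
        - 2 * r * dd 1 Y C w))"

lemma smooth1_multc[simp]: "smooth1 f \<Longrightarrow> smooth1 (\<lambda>s. f s * c)"
  using smooth1_cmult[of f c] by (simp add: mult.commute)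
lemma smooth1_divc[simp]: "smooth1 f \<Longrightarrow> smooth1 (\<lambda>s. f s / c)"
  using smooth1_cmult[of f "1/c"] by simp
lemma hdmultc[simp]: "smooth1 f \<Longrightarrow> hdv n (\<lambda>w. f w * c) x = hdv n f x * c"
  using hdcmult[of f n c x] by (simp add: mult.commute)
lemma hddivc[simp]: "smooth1 f \<Longrightarrow> hdv n (\<lambda>w. f w / c) x = hdv n f x / c"
  using hdcmult[of f n "1/c" x] by simp

lemma fact_small[simp]: "fact 2 = (2::real)" "fact 3 = (6::real)" "fact 4 = (24::real)"
  by (simp_all add: fact_numeral)

lemma L0[simp]: "L d f z 0 = f z" by (simp add: L_def)
lemma hdL0dd[simp]: "hdv k (L d F w) 0 = dd k d F w" by (simp add: dd_def hdL0)

context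
  fixes z0 :: R3 and u0 a b c n1 n3 m1 m3 r :: real
begin

abbreviation "uu \<equiv> u1 z0 u0 a b c n1 n3 m1 m3 r"

lemma u1_px: "pdir ex uu = (\<lambda>z. a + n1 * (snd (snd z) - snd (snd z0))
     + n3 / 2 * ((fst z - fst z0) ^ 2 * (snd (snd z) - snd (snd z0)))
     + m1 * (fst (snd z) - fst (snd z0)) + m3 / 2 * ((fst z - fst z0) ^ 2 * (fst (snd z) - fst (snd z0))))"
  unfolding pdir_def
  by (rule ext, rule DERIV_imp_deriv) (auto simp: u1_def ex_def algebra_simps intro!: derivative_eq_intros)

lemma u1_py: "pdir ey uu = (\<lambda>z. b + m1 * (fst z - fst z0) + m3 / 6 * (fst z - fst z0) ^ 3
     + r * (snd (snd z) - snd (snd z0)))"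
  unfolding pdir_def
  by (rule ext, rule DERIV_imp_deriv) (auto simp: u1_def ey_def algebra_simps intro!: derivative_eq_intros)

lemma u1_pt: "pdir et uu = (\<lambda>z. c + n1 * (fst z - fst z0) + n3 / 6 * (fst z - fst z0) ^ 3
     + r * (fst (snd z) - fst (snd z0)))"
  unfolding pdir_def
  by (rule ext, rule DERIV_imp_deriv) (auto simp: u1_def et_def algebra_simps intro!: derivative_eq_intros)

lemma u1_L0:
  "L ex uu z0 = (\<lambda>s. u0 + a * s)" "L ey uu z0 = (\<lambda>s. u0 + b * s)" "L et uu z0 = (\<lambda>s. u0 + c * s)"
  by (auto simp: L_def u1_def ex_def ey_def et_def)

lemma u1_L:
  "L ex (pdir ex uu) z0 = (\<lambda>s. a)" "L et (pdir ex uu) z0 = (\<lambda>s. a + n1 * s)"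
  "L ey (pdir ex uu) z0 = (\<lambda>s. a + m1 * s)"
  "L ex (pdir ey uu) z0 = (\<lambda>s. b + m1 * s + m3 / 6 * s ^ 3)" "L et (pdir ey uu) z0 = (\<lambda>s. b + r * s)"
  "L ey (pdir ey uu) z0 = (\<lambda>s. b)"
  "L ex (pdir et uu) z0 = (\<lambda>s. c + n1 * s + n3 / 6 * s ^ 3)" "L ey (pdir et uu) z0 = (\<lambda>s. c + r * s)"
  "L et (pdir et uu) z0 = (\<lambda>s. c)"
  unfolding L_def u1_px u1_py u1_pt by (auto simp: ex_def ey_def et_def)

lemma u1_gp:
  "graphpt uu (z0 + s *\<^sub>R ex) = wpt z0 u0 + s *\<^sub>R DX a"
  "graphpt uu (z0 + s *\<^sub>R ey) = wpt z0 u0 + s *\<^sub>R DY b"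
  "graphpt uu (z0 + s *\<^sub>R et) = wpt z0 u0 + s *\<^sub>R DT c"
  by (auto simp: graphpt_def u1_def ex_def ey_def et_def wpt_def DX_def DY_def DT_def)

lemma u1_at: "graphpt uu z0 = wpt z0 u0"
  using u1_gp(1)[of 0] by simp

lemma u1_lines:
  "\<And>s. pdir ex uu (z0 + s *\<^sub>R ex) = a"
  "\<And>s. pdir ex uu (z0 + s *\<^sub>R et) = a + n1 * s"
  "\<And>s. pdir ex uu (z0 + s *\<^sub>R ey) = a + m1 * s"
  "\<And>s. pdir ey uu (z0 + s *\<^sub>R ex) = b + m1 * s + m3 / 6 * s ^ 3"
  "\<And>s. pdir ey uu (z0 + s *\<^sub>R et) = b + r * s"
  "\<And>s. pdir ey uu (z0 + s *\<^sub>R ey) = b"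
  "\<And>s. pdir et uu (z0 + s *\<^sub>R ex) = c + n1 * s + n3 / 6 * s ^ 3"
  "\<And>s. pdir et uu (z0 + s *\<^sub>R ey) = c + r * s"
  "\<And>s. pdir et uu (z0 + s *\<^sub>R et) = c"
  using u1_L[THEN fun_cong] by (simp_all add: L_def)

lemma u1_Q:
  "L ex (charQ X uu) z0 = (\<lambda>s. L (DX a) (etaV X) (wpt z0 u0) s - L (DX a) (xiX X) (wpt z0 u0) s * a
     - L (DX a) (xiY X) (wpt z0 u0) s * (b + m1 * s + m3 / 6 * s ^ 3)
     - L (DX a) (tauT X) (wpt z0 u0) s * (c + n1 * s + n3 / 6 * s ^ 3))"
  "L et (charQ X uu) z0 = (\<lambda>s. L (DT c) (etaV X) (wpt z0 u0) s - L (DT c) (xiX X) (wpt z0 u0) s * (a + n1 * s)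
     - L (DT c) (xiY X) (wpt z0 u0) s * (b + r * s)
     - L (DT c) (tauT X) (wpt z0 u0) s * c)"
  "L ey (charQ X uu) z0 = (\<lambda>s. L (DY b) (etaV X) (wpt z0 u0) s - L (DY b) (xiX X) (wpt z0 u0) s * (a + m1 * s)
     - L (DY b) (xiY X) (wpt z0 u0) s * b
     - L (DY b) (tauT X) (wpt z0 u0) s * (c + r * s))"
  by (auto simp: L_def charQ_def u1_gp u1_lines simp del: u1_def)

lemma u1_Delta0:
  "Dlist [ex] uu z0 = a" "Dlist [ex,ex] uu z0 = 0" "Dlist [et,et] uu z0 = 0" "Dlist [ey,ey] uu z0 = 0"
  "Dlist [ex,ex,ex,ex] uu z0 = 0"
  using u1_lines(1)[of 0] by (simp_all only: Dlist_single Dlist2 Dlist4 u1_L0) simp_all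

lemma u1_px0: "pdir ex uu z0 = a"
  using u1_lines(1)[of 0] by simp

lemma u1_prDelta:
  assumes X: "smooth_vf X"
  shows "prDelta p s2 e X uu z0 = P1 p s2 e X z0 u0 a b c n1 n3 m1 m3 r"
proof -
  have sm: "smoothD (etaV X)" "smoothD (xiX X)" "smoothD (xiY X)" "smoothD (tauT X)"
    using X by (auto simp: smooth_vf_def smoothC_smoothD)
  show ?thesis
    unfolding prDelta_def etaJ_def Dlist_append
    apply (simp only: Dlist_single Dlist2 Dlist4 u1_Q u1_L u1_L0 u1_at u1_Delta0 u1_px0)
    apply (simp add: sm P1_def Let_def)
    apply (simp add: algebra_simps)
    done
qed

end


definition ex4 :: R4 where "ex4 = (1,0,0,0)"
definition ey4 :: R4 where "ey4 = (0,1,0,0)"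
definition et4 :: R4 where "et4 = (0,0,1,0)"
definition ev4 :: R4 where "ev4 = (0,0,0,1)"

lemma DX_dec: "DX a = ex4 + a *\<^sub>R ev4" by (simp add: DX_def ex4_def ev4_def)
lemma DY_dec: "DY b = ey4 + b *\<^sub>R ev4" by (simp add: DY_def ey4_def ev4_def)
lemma DT_dec: "DT c = et4 + c *\<^sub>R ev4" by (simp add: DT_def et4_def ev4_def)

lemma dd1: "dd 1 D F w = pdir D F w" by (simp add: dd_def)
lemma dd1'[simp]: "dd (Suc 0) D F w = pdir D F w" by (simp add: dd_def)
lemma dd2: "dd 2 D F w = pdir D (pdir D F) w" by (simp add: dd_def numeral_eq_Suc)
lemma dd3: "dd 3 D F w = pdir D (pdir D (pdir D F)) w" by (simp add: dd_def numeral_eq_Suc)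

lemma dd4: "dd 4 D F w = pdir D (pdir D (pdir D (pdir D F))) w" by (simp add: dd_def numeral_eq_Suc)

lemma const_line:
  fixes F :: "'a::real_normed_vector \<Rightarrow> real"
  assumes dF: "\<And>w. F differentiable (at w)" and z: "\<And>w. pdir d F w = 0"
  shows "F (w + s *\<^sub>R d) = F w"
proof -
  have "DERIV (L d F w) r :> 0" for r
  proof -
    have l: "(\<lambda>s. w + s *\<^sub>R d) differentiable (at r)"
      by (rule differentiable_add[OF differentiable_const differentiable_scaleR[OF differentiable_ident differentiable_const]])
    have "L d F w differentiable (at r)"
      unfolding L_def using dF l by (metis differentiable_compose)
    then have "DERIV (L d F w) r :> deriv (L d F w) r"
      by (simp add: DERIV_deriv_iff_real_differentiable)
    moreover have "deriv (L d F w) r = 0" using pdir_line[of d F w r] z by simp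
    ultimately show ?thesis by simp
  qed
  then have "L d F w s = L d F w 0" using DERIV_isconst_all by blast
  then show ?thesis by (simp add: L_def)
qed

lemma pdir_inv:
  assumes "\<And>w s. F (w + s *\<^sub>R d) = F w"
  shows "pdir d' F (w + s *\<^sub>R d) = pdir d' F w"
proof -
  have "(\<lambda>r. F (w + s *\<^sub>R d + r *\<^sub>R d')) = (\<lambda>r. F (w + r *\<^sub>R d'))"
    using assms[of "w + r *\<^sub>R d'" s for r] by (simp add: algebra_simps)
  then show ?thesis by (simp add: pdir_def)
qed

lemma pdir_of_inv:
  assumes "\<And>w s. F (w + s *\<^sub>R d) = F w"
  shows "pdir d F w = 0"
proof -
  have "(\<lambda>s. F (w + s *\<^sub>R d)) = (\<lambda>s. F w)" using assms by simp
  then show ?thesis by (simp add: pdir_def)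
qed

lemma dd2_dec:
  assumes F: "smoothD F"
  shows "dd 2 (D1 + c *\<^sub>R D2) F w = pdir D1 (pdir D1 F) w + c * (pdir D2 (pdir D1 F) w + pdir D1 (pdir D2 F) w)
          + c\<^sup>2 * pdir D2 (pdir D2 F) w"
proof -
  have d: "\<And>w. F differentiable (at w)" "\<And>w. pdir D1 F differentiable (at w)" "\<And>w. pdir D2 F differentiable (at w)"
    using F smoothD_diff smoothD_pdir by blast+
  have d2: "\<And>w. (\<lambda>w. c * pdir D2 F w) differentiable (at w)"
    using d(3) by simp
  have "pdir (D1 + c *\<^sub>R D2) F = (\<lambda>w. pdir D1 F w + c * pdir D2 F w)"
    using d by (simp add: pdir_lin_dir fun_eq_iff)
  then have "dd 2 (D1 + c *\<^sub>R D2) F w = pdir (D1 + c *\<^sub>R D2) (\<lambda>w. pdir D1 F w + c * pdir D2 F w) w"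
    by (simp add: dd2)
  also have "\<dots> = pdir D1 (\<lambda>w. pdir D1 F w + c * pdir D2 F w) w + c * pdir D2 (\<lambda>w. pdir D1 F w + c * pdir D2 F w) w"
    using d d2 by (intro pdir_lin_dir) simp
  also have "\<dots> = pdir D1 (pdir D1 F) w + c * pdir D1 (pdir D2 F) w + c * (pdir D2 (pdir D1 F) w + c * pdir D2 (pdir D2 F) w)"
    using d d2 by (simp add: pdir_add pdir_scale)
  finally show ?thesis by (simp add: algebra_simps power2_eq_square)
qed

lemma wpt_surj: "wpt (fst w, fst (snd w), fst (snd (snd w))) (snd (snd (snd w))) = w"
  by (simp add: wpt_def)

lemma pdir_fun0: "(\<And>w. pdir d F w = 0) \<Longrightarrow> pdir d' (pdir d F) w = 0"
proof -
  assume "\<And>w. pdir d F w = 0"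
  then have "pdir d F = (\<lambda>w. 0)" by auto
  then show ?thesis by simp
qed

lemma P1_expand: "P1 p s2 e X z0 u0 a b c n1 n3 m1 m3 r =
   P1 p s2 e X z0 u0 a b c 0 0 0 0 0
   + n1 * (- 2 * dd 1 (DT c) (xiX X) (wpt z0 u0) + 2 * (1 + (p + 1) * a powr p) * dd 1 (DX a) (tauT X) (wpt z0 u0)
           + 4 * e * dd 3 (DX a) (tauT X) (wpt z0 u0))
   + n3 * (4 * e * dd 1 (DX a) (tauT X) (wpt z0 u0))
   + m1 * (2 * (1 + (p + 1) * a powr p) * dd 1 (DX a) (xiY X) (wpt z0 u0) + 4 * e * dd 3 (DX a) (xiY X) (wpt z0 u0)
           + 2 * s2 * dd 1 (DY b) (xiX X) (wpt z0 u0))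
   + m3 * (4 * e * dd 1 (DX a) (xiY X) (wpt z0 u0))
   + r * (- 2 * dd 1 (DT c) (xiY X) (wpt z0 u0) + 2 * s2 * dd 1 (DY b) (tauT X) (wpt z0 u0))"
  unfolding P1_def Let_def by (simp add: algebra_simps)

locale symctx =
  fixes p s2 e :: real and X :: vf
  assumes sym: "is_point_symmetry p s2 e X" and smv: "smooth_vf X"
    and e0: "e \<noteq> 0" and s20: "s2 \<noteq> 0"
begin

abbreviation "A \<equiv> xiX X"
abbreviation "B \<equiv> xiY X"
abbreviation "C \<equiv> tauT X"
abbreviation "E \<equiv> etaV X"

lemma smA: "smoothD A" and smB: "smoothD B" and smC: "smoothD C" and smE: "smoothD E"
  using smv by (auto simp: smooth_vf_def smoothC_smoothD)

lemma diffs: "A differentiable (at w)" "B differentiable (at w)" "C differentiable (at w)" "E differentiable (at w)"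
  using smA smB smC smE smoothD_diff by auto

lemma P1_zero: "a > 0 \<Longrightarrow> P1 p s2 e X z0 u0 a b c n1 n3 m1 m3 r = 0"
proof -
  assume a: "a > 0"
  let ?u = "u1 z0 u0 a b c n1 n3 m1 m3 r"
  have "smoothC ?u" using u1_P3 P3_smoothD smoothD_smoothC by blast
  moreover have "Dlist [ex] ?u z0 > 0" using a by (simp only: u1_Delta0)
  moreover have "Delta p s2 e ?u z0 = 0" by (simp only: Delta_def u1_Delta0)
  ultimately have "prDelta p s2 e X ?u z0 = 0" using sym unfolding is_point_symmetry_def by blast
  then show ?thesis using u1_prDelta[OF smv] by simp
qed

lemma Kn3: "a > 0 \<Longrightarrow> dd 1 (DX a) C (wpt z0 u0) = 0"
  using P1_zero[of a z0 u0 0 0 0 1 0 0 0] P1_zero[of a z0 u0 0 0 0 0 0 0 0] P1_expand[of p s2 e X z0 u0 a 0 0 0 1 0 0 0] e0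
  by simp

lemma Km3: "a > 0 \<Longrightarrow> dd 1 (DX a) B (wpt z0 u0) = 0"
  using P1_zero[of a z0 u0 0 0 0 0 0 1 0] P1_zero[of a z0 u0 0 0 0 0 0 0 0] P1_expand[of p s2 e X z0 u0 a 0 0 0 0 0 1 0] e0
  by simp

lemma C_xv: "pdir ex4 C w = 0" "pdir ev4 C w = 0"
proof -
  obtain z0 u0 where w: "w = wpt z0 u0" using wpt_surj by metis
  have "pdir ex4 C w + a * pdir ev4 C w = 0" if "a > 0" for a
    using Kn3[OF that, of z0 u0] diffs(3)[of w] by (simp add: dd1 DX_dec pdir_lin_dir w)
  from this[of 1] this[of 2] show "pdir ex4 C w = 0" "pdir ev4 C w = 0" by simp_all
qed

lemma B_xv: "pdir ex4 B w = 0" "pdir ev4 B w = 0"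
proof -
  obtain z0 u0 where w: "w = wpt z0 u0" using wpt_surj by metis
  have "pdir ex4 B w + a * pdir ev4 B w = 0" if "a > 0" for a
    using Km3[OF that, of z0 u0] diffs(2)[of w] by (simp add: dd1 DX_dec pdir_lin_dir w)
  from this[of 1] this[of 2] show "pdir ex4 B w = 0" "pdir ev4 B w = 0" by simp_all
qed

lemma XC0: "pdir (DX a) C w = 0"
  using C_xv diffs(3) by (simp add: DX_dec pdir_lin_dir)
lemma XB0: "pdir (DX a) B w = 0"
  using B_xv diffs(2) by (simp add: DX_dec pdir_lin_dir)

lemma Kn1: "dd 1 (DT c) A (wpt z0 u0) = 0"
proof -
  have "dd 1 (DX 1) C (wpt z0 u0) = 0" "dd 3 (DX 1) C (wpt z0 u0) = 0"
    using XC0 by (simp_all add: dd1 dd3 pdir_fun0)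
  then show ?thesis
    using P1_zero[of 1 z0 u0 0 c 1 0 0 0 0] P1_zero[of 1 z0 u0 0 c 0 0 0 0 0] P1_expand[of p s2 e X z0 u0 1 0 c 1 0 0 0 0]
    by simp
qed

lemma Km1: "dd 1 (DY b) A (wpt z0 u0) = 0"
proof -
  have "dd 1 (DX 1) B (wpt z0 u0) = 0" "dd 3 (DX 1) B (wpt z0 u0) = 0"
    using XB0 by (simp_all add: dd1 dd3 pdir_fun0)
  then show ?thesis
    using P1_zero[of 1 z0 u0 b 0 0 0 1 0 0] P1_zero[of 1 z0 u0 b 0 0 0 0 0 0] P1_expand[of p s2 e X z0 u0 1 b 0 0 0 1 0 0] s20
    by simp
qed

lemma Kr: "dd 1 (DT c) B (wpt z0 u0) = s2 * dd 1 (DY b) C (wpt z0 u0)"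
  using P1_zero[of 1 z0 u0 b c 0 0 0 0 1] P1_zero[of 1 z0 u0 b c 0 0 0 0 0] P1_expand[of p s2 e X z0 u0 1 b c 0 0 0 0 1]
  by simp

lemma A_tv: "pdir et4 A w = 0" "pdir ev4 A w = 0" "pdir ey4 A w = 0"
proof -
  obtain z0 u0 where w: "w = wpt z0 u0" using wpt_surj by metis
  have "pdir et4 A w + c * pdir ev4 A w = 0" for c
    using Kn1[of c z0 u0] diffs(1)[of w] by (simp add: dd1 DT_dec pdir_lin_dir w)
  from this[of 0] this[of 1] show "pdir et4 A w = 0" "pdir ev4 A w = 0" by simp_all
  have "pdir ey4 A w + 0 * pdir ev4 A w = 0"
    using Km1[of 0 z0 u0] diffs(1)[of w] by (simp add: dd1 DY_dec pdir_lin_dir w)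
  then show "pdir ey4 A w = 0" by simp
qed

lemma BC_rel: "pdir et4 B w = s2 * pdir ey4 C w"
proof -
  obtain z0 u0 where w: "w = wpt z0 u0" using wpt_surj by metis
  show ?thesis
    using Kr[of 0 z0 u0 0] diffs(2,3)[of w] by (simp add: dd1 DT_dec DY_dec pdir_lin_dir w)
qed

lemma C_inv_v: "C (w + s *\<^sub>R ev4) = C w"
  using const_line[of C ev4] diffs(3) C_xv(2) by blast
lemma A_inv_v: "A (w + s *\<^sub>R ev4) = A w"
  using const_line[of A ev4] diffs(1) A_tv(2) by blast

lemma TA0: "pdir (DT c) A w = 0"
  using A_tv diffs(1) by (simp add: DT_dec pdir_lin_dir)

lemma E_vv: "pdir ev4 (pdir ev4 E) w = 0"
proof -
  obtain z0 u0 where w: "w = wpt z0 u0" using wpt_surj by metis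
  let ?G = "dd 2 (DT 0) E w - (1 + (p + 1)) * (dd 2 (DX 1) E w - dd 2 (DX 1) A w)
            - e * (dd 4 (DX 1) E w - dd 4 (DX 1) A w) - s2 * (dd 2 (DY 0) E w - dd 2 (DY 0) A w)"
  let ?H = "pdir ev4 (pdir et4 E) w + pdir et4 (pdir ev4 E) w - pdir et4 (pdir et4 C) w + s2 * dd 2 (DY 0) C w"
  have Cvt: "pdir ev4 (pdir et4 C) w = 0"
    by (rule pdir_of_inv, rule pdir_inv) (rule C_inv_v)
  have Ctv: "pdir et4 (pdir ev4 C) w = 0" "pdir ev4 (pdir ev4 C) w = 0"
    using C_xv(2) by (simp_all add: pdir_fun0)
  have X0: "dd 2 (DX 1) C w = 0" "dd 4 (DX 1) C w = 0"
    using XC0 by (simp_all add: dd2 dd4 pdir_fun0)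
  have T0: "dd 2 (DT c) A w = 0" for c
    using TA0 by (simp add: dd2 pdir_fun0)
  have eq: "P1 p s2 e X z0 u0 1 0 c 0 0 0 0 0 = ?G + c * ?H + c\<^sup>2 * pdir ev4 (pdir ev4 E) w" for c
  proof -
    have "dd 2 (DT c) E w = dd 2 (DT 0) E w + c * (pdir ev4 (pdir et4 E) w + pdir et4 (pdir ev4 E) w)
          + c\<^sup>2 * pdir ev4 (pdir ev4 E) w"
      using dd2_dec[OF smE, of et4 c ev4 w] dd2_dec[OF smE, of et4 0 ev4 w] by (simp add: DT_dec)
    moreover have "dd 2 (DT c) C w = pdir et4 (pdir et4 C) w"
      using dd2_dec[OF smC, of et4 c ev4 w] Cvt Ctv by (simp add: DT_dec)
    ultimately show ?thesis
      unfolding P1_def Let_def using X0 T0 w by (simp add: algebra_simps power2_eq_square)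
  qed
  have "?G + 1 * ?H + 1\<^sup>2 * pdir ev4 (pdir ev4 E) w = 0"
       "?G + (-1) * ?H + (-1)\<^sup>2 * pdir ev4 (pdir ev4 E) w = 0"
       "?G + 0 * ?H + 0\<^sup>2 * pdir ev4 (pdir ev4 E) w = 0"
    using eq[of 1] eq[of "-1"] eq[of 0] P1_zero[of 1 z0 u0 0 _ 0 0 0 0 0] by simp_all
  then show ?thesis by simp
qed

end


definition pr3 :: "R4 \<Rightarrow> R3" where "pr3 w = (fst w, fst (snd w), fst (snd (snd w)))"
definition vv :: "R4 \<Rightarrow> real" where "vv w = snd (snd (snd w))"

definition mkX :: "(R3 \<Rightarrow> real) \<Rightarrow> (R3 \<Rightarrow> real) \<Rightarrow> (R3 \<Rightarrow> real) \<Rightarrow> (R3 \<Rightarrow> real) \<Rightarrow> (R3 \<Rightarrow> real) \<Rightarrow> vf" where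
  "mkX aa bb cc al be = ((\<lambda>w. aa (pr3 w)), (\<lambda>w. bb (pr3 w)), (\<lambda>w. cc (pr3 w)),
                        (\<lambda>w. be (pr3 w) + vv w * al (pr3 w)))"

lemma mkX_comp:
  "xiX (mkX aa bb cc al be) w = aa (pr3 w)" "xiY (mkX aa bb cc al be) w = bb (pr3 w)"
  "tauT (mkX aa bb cc al be) w = cc (pr3 w)" "etaV (mkX aa bb cc al be) w = be (pr3 w) + vv w * al (pr3 w)"
  by (simp_all add: mkX_def xiX_def xiY_def tauT_def etaV_def)

lemma pr3_gp[simp]: "pr3 (graphpt u z) = z" by (simp add: pr3_def graphpt_def)
lemma vv_gp[simp]: "vv (graphpt u z) = u z" by (simp add: vv_def graphpt_def)

lemma charQ_mkX: "charQ (mkX aa bb cc al be) u z =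
   be z + u z * al z - aa z * pdir ex u z - bb z * pdir ey u z - cc z * pdir et u z"
  by (simp add: charQ_def mkX_comp mult.commute)

lemma charQ_mkX_L: "L d (charQ (mkX aa bb cc al be) u) z =
   (\<lambda>s. L d be z s + L d u z s * L d al z s - L d aa z s * L d (pdir ex u) z s
        - L d bb z s * L d (pdir ey u) z s - L d cc z s * L d (pdir et u) z s)"
  by (simp add: L_def charQ_mkX)

definition P2 :: "real \<Rightarrow> real \<Rightarrow> real \<Rightarrow> (R3 \<Rightarrow> real) \<Rightarrow> (R3 \<Rightarrow> real) \<Rightarrow> (R3 \<Rightarrow> real) \<Rightarrow> (R3 \<Rightarrow> real) \<Rightarrow> (R3 \<Rightarrow> real) \<Rightarrow> (R3 \<Rightarrow> real) \<Rightarrow> R3 \<Rightarrow> real" where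
  "P2 p s2 e aa bb cc al be u z0 = (let
     D = (\<lambda>F xs. Dlist xs F z0);
     u0 = u z0; ux = D u [ex]; uxx = D u [ex,ex]; uxxx = D u [ex,ex,ex]; uxxxx = D u [ex,ex,ex,ex];
     uy = D u [ey]; ut = D u [et]; uyy = D u [ey,ey]; utt = D u [et,et]; uty = D u [et,ey]; uyt = D u [ey,et];
     \<alpha> = al z0;
     \<eta>x = D be [ex] + D al [ex] * u0 + \<alpha> * ux - D aa [ex] * ux;
     \<eta>xx = D be [ex,ex] + D al [ex,ex] * u0 + 2 * D al [ex] * ux + \<alpha> * uxx - D aa [ex,ex] * ux - 2 * D aa [ex] * uxx;
     \<eta>xxxx = D be [ex,ex,ex,ex] + D al [ex,ex,ex,ex] * u0 + 4 * D al [ex,ex,ex] * ux + 6 * D al [ex,ex] * uxx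
        + 4 * D al [ex] * uxxx + \<alpha> * uxxxx - D aa [ex,ex,ex,ex] * ux - 4 * D aa [ex,ex,ex] * uxx
        - 6 * D aa [ex,ex] * uxxx - 4 * D aa [ex] * uxxxx;
     \<eta>tt = D be [et,et] + D al [et,et] * u0 + 2 * D al [et] * ut + \<alpha> * utt - D bb [et,et] * uy - 2 * D bb [et] * uty
        - D cc [et,et] * ut - 2 * D cc [et] * utt;
     \<eta>yy = D be [ey,ey] + D al [ey,ey] * u0 + 2 * D al [ey] * uy + \<alpha> * uyy - D bb [ey,ey] * uy - 2 * D bb [ey] * uyy
        - D cc [ey,ey] * ut - 2 * D cc [ey] * uyt
   in \<eta>tt - (1 + (p + 1) * ux powr p) * \<eta>xx - (p + 1) * p * ux powr (p - 1) * uxx * \<eta>x - e * \<eta>xxxx - s2 * \<eta>yy)"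

lemma hdL_list:
  "hdv 1 (L d F z) 0 = Dlist [d] F z" "hdv 2 (L d F z) 0 = Dlist [d,d] F z"
  "hdv 3 (L d F z) 0 = Dlist [d,d,d] F z" "hdv 4 (L d F z) 0 = Dlist [d,d,d,d] F z"
  "hdv (Suc 0) (L d F z) 0 = Dlist [d] F z"
  using Dlist1[of d F z] Dlist2[of d F z] Dlist3[of d F z] Dlist4[of d F z] by simp_all

lemma hdmult1s[simp]: "smooth1 f \<Longrightarrow> smooth1 g \<Longrightarrow> hdv (Suc 0) (\<lambda>w. f w * g w) x =
   hdv (Suc 0) f x * g x + f x * hdv (Suc 0) g x"
  using hdmult1[of f g x] by simp

lemma pdir_const_fun[simp]: "pdir d (\<lambda>w. c) = (\<lambda>w. 0)" by (simp add: fun_eq_iff)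

lemma Dlist_shift: "Dlist xs (pdir d F) z = Dlist (xs @ [d]) F z"
  by (simp add: Dlist_append)

lemma pdir_to_Dlist: "pdir d F z = Dlist [d] F z" by simp

lemma zero_lists:
  assumes "pdir d F = (\<lambda>z. 0)"
  shows "Dlist [d] F z = 0" "Dlist [d,d] F z = 0" "Dlist [d,d,d] F z = 0" "Dlist [d,d,d,d] F z = 0"
  using assms by simp_all

lemma P2_formula:
  assumes sm: "smoothD aa" "smoothD bb" "smoothD cc" "smoothD al" "smoothD be" "smoothD u"
    and st: "pdir ey aa = (\<lambda>z. 0)" "pdir et aa = (\<lambda>z. 0)" "pdir ex bb = (\<lambda>z. 0)" "pdir ex cc = (\<lambda>z. 0)"
  shows "prDelta p s2 e (mkX aa bb cc al be) u z0 = P2 p s2 e aa bb cc al be u z0"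
proof -
  have smp: "smoothD (pdir ex u)" "smoothD (pdir ey u)" "smoothD (pdir et u)"
    using sm(6) smoothD_pdir by auto
  note zs = zero_lists[OF st(1)] zero_lists[OF st(2)] zero_lists[OF st(3)] zero_lists[OF st(4)]
  show ?thesis
    unfolding prDelta_def etaJ_def
    apply (simp only: append_Cons append_Nil Dlist1 Dlist2 Dlist4 charQ_mkX_L mkX_comp pr3_gp)
    apply (simp add: sm smp hdL_list Dlist_shift del: Dlist_Cons)
    apply (simp only: pdir_to_Dlist zs)
    apply (simp add: P2_def Let_def algebra_simps del: Dlist_Cons)
    done
qed


lemma lin_pdir:
  assumes T: "linear T"
  shows "pdir d (\<lambda>z. F (T z)) z = pdir (T d) F (T z)"
proof -
  have "(\<lambda>s. F (T (z + s *\<^sub>R d))) = (\<lambda>s. F (T z + s *\<^sub>R T d))"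
    using T by (simp add: linear_add linear_scale)
  then show ?thesis by (simp add: pdir_def)
qed

lemma lin_Dlist:
  assumes T: "linear T"
  shows "Dlist ds (\<lambda>z. F (T z)) = (\<lambda>z. Dlist (map T ds) F (T z))"
proof (induction ds)
  case Nil then show ?case by simp
next
  case (Cons d ds)
  have "Dlist (d#ds) (\<lambda>z. F (T z)) = pdir d (\<lambda>z. Dlist (map T ds) F (T z))" using Cons by simp
  then show ?case by (simp add: fun_eq_iff lin_pdir[OF T])
qed

lemma lin_smoothD:
  fixes T :: "'a::euclidean_space \<Rightarrow> 'b::euclidean_space"
  assumes T: "linear T" and F: "smoothD F"
  shows "smoothD (\<lambda>z. F (T z))"
  unfolding smoothD_def
proof (intro allI)
  fix ds z
  have "T differentiable (at z)"
    using T by (simp add: bounded_linear_imp_differentiable linear_conv_bounded_linear)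
  then have "(\<lambda>z. Dlist (map T ds) F (T z)) differentiable (at z)"
    using F unfolding smoothD_def by (metis differentiable_compose)
  then show "Dlist ds (\<lambda>z. F (T z)) differentiable (at z)"
    by (simp add: lin_Dlist[OF T])
qed

lemma affine_line:
  fixes F :: "'a::real_normed_vector \<Rightarrow> real"
  assumes dF: "\<And>w. F differentiable (at w)" and dF': "\<And>w. pdir d F differentiable (at w)"
    and z: "\<And>w. pdir d (pdir d F) w = 0"
  shows "F (w + s *\<^sub>R d) = F w + s * pdir d F w"
proof -
  let ?k = "pdir d F w"
  have k: "pdir d F (w + r *\<^sub>R d) = ?k" for r using const_line[OF dF' z] .
  have "DERIV (\<lambda>r. L d F w r - r * ?k) r :> 0" for r
  proof -
    have l: "(\<lambda>s. w + s *\<^sub>R d) differentiable (at r)"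
      by (rule differentiable_add[OF differentiable_const differentiable_scaleR[OF differentiable_ident differentiable_const]])
    have "L d F w differentiable (at r)"
      unfolding L_def using dF l by (metis differentiable_compose)
    then have "DERIV (L d F w) r :> deriv (L d F w) r"
      by (simp add: DERIV_deriv_iff_real_differentiable)
    moreover have "deriv (L d F w) r = ?k" using pdir_line[of d F w r] k by simp
    ultimately have "DERIV (L d F w) r :> ?k" by simp
    then have "DERIV (\<lambda>r. L d F w r - r * ?k) r :> ?k - 1 * ?k"
      by (intro DERIV_diff DERIV_cmult_right DERIV_ident)
    then show ?thesis by simp
  qed
  then have "L d F w s - s * ?k = L d F w 0 - 0 * ?k" using DERIV_isconst_all by blast
  then show ?thesis by (simp add: L_def)
qed

lemma affine_pdir_inv:
  assumes "\<And>w s. F (w + s *\<^sub>R d) = F w + s * K"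
  shows "pdir d' F (w + s *\<^sub>R d) = pdir d' F w"
proof -
  have "(\<lambda>r. F (w + s *\<^sub>R d + r *\<^sub>R d')) = (\<lambda>r. F (w + r *\<^sub>R d') + s * K)"
    using assms[of "w + r *\<^sub>R d'" s for r] by (simp add: algebra_simps)
  moreover have "deriv (\<lambda>r. F (w + r *\<^sub>R d') + s * K) 0 = deriv (\<lambda>r. F (w + r *\<^sub>R d')) 0"
  proof -
    have "\<And>D. DERIV (\<lambda>r. F (w + r *\<^sub>R d') + s * K) 0 :> D \<longleftrightarrow> DERIV (\<lambda>r. F (w + r *\<^sub>R d')) 0 :> D"
    proof
      fix D assume "DERIV (\<lambda>r. F (w + r *\<^sub>R d') + s * K) 0 :> D"
      then have "DERIV (\<lambda>r. F (w + r *\<^sub>R d') + s * K - s * K) 0 :> D - 0"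
        by (intro derivative_intros) auto
      then show "DERIV (\<lambda>r. F (w + r *\<^sub>R d')) 0 :> D" by simp
    next
      fix D assume "DERIV (\<lambda>r. F (w + r *\<^sub>R d')) 0 :> D"
      then show "DERIV (\<lambda>r. F (w + r *\<^sub>R d') + s * K) 0 :> D"
        using DERIV_add[of _ D 0 _ "\<lambda>r. s * K" 0] by simp
    qed
    then show ?thesis unfolding deriv_def by simp
  qed
  ultimately show ?thesis by (simp add: pdir_def)
qed

definition emb :: "R3 \<Rightarrow> R4" where "emb z = wpt z 0"

lemma emb_linear: "linear emb"
  by (rule linearI) (auto simp: emb_def wpt_def)

lemma emb_dirs: "emb ex = ex4" "emb ey = ey4" "emb et = et4"
  by (simp_all add: emb_def wpt_def ex_def ey_def et_def ex4_def ey4_def et4_def)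

lemma w_dec: "w = emb (pr3 w) + vv w *\<^sub>R ev4"
  by (simp add: emb_def wpt_def pr3_def vv_def ev4_def)

context symctx
begin

definition "A3 = (\<lambda>z. A (emb z))"
definition "B3 = (\<lambda>z. B (emb z))"
definition "C3 = (\<lambda>z. C (emb z))"
definition "al3 = (\<lambda>z. pdir ev4 E (emb z))"
definition "be3 = (\<lambda>z. E (emb z))"

lemma sm3: "smoothD A3" "smoothD B3" "smoothD C3" "smoothD al3" "smoothD be3"
  unfolding A3_def B3_def C3_def al3_def be3_def
  using lin_smoothD[OF emb_linear] smA smB smC smE smoothD_pdir[OF smE] by auto

lemma B_inv_v: "B (w + s *\<^sub>R ev4) = B w"
  using const_line[of B ev4] diffs(2) B_xv(2) by blast

lemma E_aff: "E (w + s *\<^sub>R ev4) = E w + s * pdir ev4 E w"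
  using affine_line[of E ev4] diffs(4) smoothD_diff[OF smoothD_pdir[OF smE]] E_vv by blast

lemma X_eq: "X = mkX A3 B3 C3 al3 be3"
proof -
  have X: "X = (A, B, C, E)" by (simp add: xiX_def xiY_def tauT_def etaV_def)
  have "A = (\<lambda>w. A3 (pr3 w))" unfolding A3_def
    by (rule ext, subst (1) w_dec) (rule A_inv_v)
  moreover have "B = (\<lambda>w. B3 (pr3 w))" unfolding B3_def
    by (rule ext, subst (1) w_dec) (rule B_inv_v)
  moreover have "C = (\<lambda>w. C3 (pr3 w))" unfolding C3_def
    by (rule ext, subst (1) w_dec) (rule C_inv_v)
  moreover have "E = (\<lambda>w. be3 (pr3 w) + vv w * al3 (pr3 w))" unfolding be3_def al3_def
    by (rule ext, subst (1) w_dec) (rule E_aff)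
  ultimately show ?thesis using X by (simp add: mkX_def)
qed

lemma struct3: "pdir ey A3 = (\<lambda>z. 0)" "pdir et A3 = (\<lambda>z. 0)" "pdir ex B3 = (\<lambda>z. 0)" "pdir ex C3 = (\<lambda>z. 0)"
  unfolding A3_def B3_def C3_def
  by (simp_all add: fun_eq_iff lin_pdir[OF emb_linear] emb_dirs A_tv B_xv C_xv)

lemma pdir3: "pdir d A3 z = pdir (emb d) A (emb z)" "pdir d B3 z = pdir (emb d) B (emb z)"
  "pdir d C3 z = pdir (emb d) C (emb z)"
  unfolding A3_def B3_def C3_def by (simp_all add: lin_pdir[OF emb_linear])

lemma BC3: "pdir et B3 z = s2 * pdir ey C3 z"
  by (simp add: pdir3 emb_dirs BC_rel)

end


definition u2 :: "R3 \<Rightarrow> real \<Rightarrow> real \<Rightarrow> real \<Rightarrow> real \<Rightarrow> real \<Rightarrow> real \<Rightarrow> real \<Rightarrow> R3 \<Rightarrow> real" where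
  "u2 z0 u0 a q g m h k = (\<lambda>z.
     u0 + a * (fst z - fst z0) + q / 2 * (fst z - fst z0) ^ 2 + g / 6 * (fst z - fst z0) ^ 3
     + m / 24 * (fst z - fst z0) ^ 4 + h / 2 * (fst (snd z) - fst (snd z0)) ^ 2
     + k / 2 * (snd (snd z) - snd (snd z0)) ^ 2)"

lemma u2_P3: "u2 z0 u0 a q g m h k \<in> P3"
  unfolding u2_def by (intro P3_intros)

lemma u2_smoothD: "smoothD (u2 z0 u0 a q g m h k)"
  using u2_P3 P3_smoothD by blast

context
  fixes z0 :: R3 and u0 a q g m h k :: real
begin

abbreviation "uv \<equiv> u2 z0 u0 a q g m h k"

lemma u2_py: "pdir ey uv = (\<lambda>z. h * (fst (snd z) - fst (snd z0)))"
  unfolding pdir_def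
  apply (rule ext, rule DERIV_imp_deriv)
  apply (auto simp: u2_def ey_def intro!: derivative_eq_intros)
  done

lemma u2_pt: "pdir et uv = (\<lambda>z. k * (snd (snd z) - snd (snd z0)))"
  unfolding pdir_def
  apply (rule ext, rule DERIV_imp_deriv)
  apply (auto simp: u2_def et_def intro!: derivative_eq_intros)
  done

lemma u2_L: "L ex uv z0 = (\<lambda>s. u0 + a * s + q / 2 * s ^ 2 + g / 6 * s ^ 3 + m / 24 * s ^ 4)"
  "L ey uv z0 = (\<lambda>s. u0 + h / 2 * s ^ 2)" "L et uv z0 = (\<lambda>s. u0 + k / 2 * s ^ 2)"
  by (auto simp: L_def u2_def ex_def ey_def et_def)

lemma u2_L2: "L et (pdir ey uv) z0 = (\<lambda>s. 0)" "L ey (pdir et uv) z0 = (\<lambda>s. 0)"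
  unfolding L_def u2_py u2_pt by (auto simp: ey_def et_def)

lemma u2_jets:
  "uv z0 = u0" "Dlist [ex] uv z0 = a" "Dlist [ex,ex] uv z0 = q" "Dlist [ex,ex,ex] uv z0 = g"
  "Dlist [ex,ex,ex,ex] uv z0 = m" "Dlist [ey] uv z0 = 0" "Dlist [et] uv z0 = 0"
  "Dlist [ey,ey] uv z0 = h" "Dlist [et,et] uv z0 = k" "Dlist [et,ey] uv z0 = 0" "Dlist [ey,et] uv z0 = 0"
proof -
  show "uv z0 = u0" by (simp add: u2_def)
  show "Dlist [ex] uv z0 = a" "Dlist [ex,ex] uv z0 = q" "Dlist [ex,ex,ex] uv z0 = g"
       "Dlist [ex,ex,ex,ex] uv z0 = m" "Dlist [ey] uv z0 = 0" "Dlist [et] uv z0 = 0"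
       "Dlist [ey,ey] uv z0 = h" "Dlist [et,et] uv z0 = k"
    by (simp_all only: Dlist1 Dlist2 Dlist3 Dlist4 u2_L) simp_all
  have "Dlist [et,ey] uv z0 = Dlist [et] (pdir ey uv) z0" "Dlist [ey,et] uv z0 = Dlist [ey] (pdir et uv) z0"
    by simp_all
  then show "Dlist [et,ey] uv z0 = 0" "Dlist [ey,et] uv z0 = 0"
    by (simp_all only: Dlist1 u2_L2) simp_all
qed

end

lemma P2_u2_expand:
  "P2 p s2 e aa bb cc al be (u2 z0 u0 a q g m h k) z0 =
     (Dlist [et,et] be z0 - (1 + (p + 1) * a powr p) * (Dlist [ex,ex] be z0 + 2 * Dlist [ex] al z0 * a - Dlist [ex,ex] aa z0 * a)
      - e * (Dlist [ex,ex,ex,ex] be z0 + 4 * Dlist [ex,ex,ex] al z0 * a - Dlist [ex,ex,ex,ex] aa z0 * a)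
      - s2 * Dlist [ey,ey] be z0)
   + u0 * (Dlist [et,et] al z0 - (1 + (p + 1) * a powr p) * Dlist [ex,ex] al z0 - e * Dlist [ex,ex,ex,ex] al z0
           - s2 * Dlist [ey,ey] al z0)
   + q * (- (1 + (p + 1) * a powr p) * (al z0 - 2 * Dlist [ex] aa z0)
          - (p + 1) * p * a powr (p - 1) * (Dlist [ex] be z0 + (al z0 - Dlist [ex] aa z0) * a)
          - e * (6 * Dlist [ex,ex] al z0 - 4 * Dlist [ex,ex,ex] aa z0)
          + u0 * (- (p + 1) * p * a powr (p - 1) * Dlist [ex] al z0))
   + g * (- e * (4 * Dlist [ex] al z0 - 6 * Dlist [ex,ex] aa z0))
   + m * (- e * (al z0 - 4 * Dlist [ex] aa z0))
   + h * (- s2 * (al z0 - 2 * Dlist [ey] bb z0))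
   + k * (al z0 - 2 * Dlist [et] cc z0)"
  unfolding P2_def Let_def u2_jets by (simp add: algebra_simps)

context symctx
begin

lemma P2_zero:
  assumes a: "a > 0"
  shows "P2 p s2 e A3 B3 C3 al3 be3 (u2 z0 u0 a q g m h ((1 + (p + 1) * a powr p) * q + e * m + s2 * h)) z0 = 0"
proof -
  let ?u = "u2 z0 u0 a q g m h ((1 + (p + 1) * a powr p) * q + e * m + s2 * h)"
  have "smoothC ?u" using u2_smoothD smoothD_smoothC by blast
  moreover have "Dlist [ex] ?u z0 > 0" using a by (simp only: u2_jets)
  moreover have "Delta p s2 e ?u z0 = 0" unfolding Delta_def u2_jets by (simp add: algebra_simps)
  ultimately have "prDelta p s2 e X ?u z0 = 0" using sym unfolding is_point_symmetry_def by blast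
  then show ?thesis
    using P2_formula[OF sm3 u2_smoothD struct3] X_eq by simp
qed

end


lemma pow3_indep:
  fixes c0 c1 c2 r s :: real
  assumes r: "r \<noteq> 0" and s: "s \<noteq> 0" and rs: "r \<noteq> s"
    and h: "\<And>a. a > 0 \<Longrightarrow> c0 + c1 * a powr r + c2 * a powr s = 0"
  shows "c0 = 0 \<and> c1 = 0 \<and> c2 = 0"
proof -
  define x where "x = (2::real) powr r"
  define y where "y = (2::real) powr s"
  have x1: "x \<noteq> 1" unfolding x_def using r by (simp add: powr_eq_one_iff_gen)
  have y1: "y \<noteq> 1" unfolding y_def using s by (simp add: powr_eq_one_iff_gen)
  have xy: "x \<noteq> y" unfolding x_def y_def using rs by (simp add: powr_inj)
  have "(4::real) powr r = x\<^sup>2" unfolding x_def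
    using powr_mult[of 2 2 r] by (simp add: power2_eq_square)
  moreover have "(4::real) powr s = y\<^sup>2" unfolding y_def
    using powr_mult[of 2 2 s] by (simp add: power2_eq_square)
  ultimately have e1: "c0 + c1 + c2 = 0" and e2: "c0 + c1 * x + c2 * y = 0" and e3: "c0 + c1 * x\<^sup>2 + c2 * y\<^sup>2 = 0"
    using h[of 1] h[of 2] h[of 4] unfolding x_def y_def by simp_all
  have f1: "c1 * (x - 1) + c2 * (y - 1) = 0" using e1 e2 by (simp add: algebra_simps)
  have f2: "c1 * (x\<^sup>2 - 1) + c2 * (y\<^sup>2 - 1) = 0" using e1 e3 by (simp add: algebra_simps)
  have "c2 * ((y - 1) * (y - x)) = c1 * (x\<^sup>2 - 1) + c2 * (y\<^sup>2 - 1) - (x + 1) * (c1 * (x - 1) + c2 * (y - 1))"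
    by (simp add: algebra_simps power2_eq_square)
  then have "c2 * ((y - 1) * (y - x)) = 0" using f1 f2 by simp
  then have c2: "c2 = 0" using y1 xy by simp
  then have "c1 = 0" using f1 x1 by simp
  then show ?thesis using c2 e1 by simp
qed

context symctx
begin

definition "RR a = 1 + (p + 1) * a powr p"
definition "F0 a z0 = Dlist [et,et] be3 z0 - RR a * (Dlist [ex,ex] be3 z0 + 2 * Dlist [ex] al3 z0 * a - Dlist [ex,ex] A3 z0 * a)
      - e * (Dlist [ex,ex,ex,ex] be3 z0 + 4 * Dlist [ex,ex,ex] al3 z0 * a - Dlist [ex,ex,ex,ex] A3 z0 * a)
      - s2 * Dlist [ey,ey] be3 z0"
definition "Ku a z0 = Dlist [et,et] al3 z0 - RR a * Dlist [ex,ex] al3 z0 - e * Dlist [ex,ex,ex,ex] al3 z0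
           - s2 * Dlist [ey,ey] al3 z0"
definition "Kq a z0 = - RR a * (al3 z0 - 2 * Dlist [ex] A3 z0)
          - (p + 1) * p * a powr (p - 1) * (Dlist [ex] be3 z0 + (al3 z0 - Dlist [ex] A3 z0) * a)
          - e * (6 * Dlist [ex,ex] al3 z0 - 4 * Dlist [ex,ex,ex] A3 z0) + RR a * (al3 z0 - 2 * Dlist [et] C3 z0)"
definition "Kqu a z0 = - (p + 1) * p * a powr (p - 1) * Dlist [ex] al3 z0"
definition "Kg z0 = - e * (4 * Dlist [ex] al3 z0 - 6 * Dlist [ex,ex] A3 z0)"
definition "Km z0 = - e * (al3 z0 - 4 * Dlist [ex] A3 z0) + e * (al3 z0 - 2 * Dlist [et] C3 z0)"
definition "Kh z0 = - s2 * (al3 z0 - 2 * Dlist [ey] B3 z0) + s2 * (al3 z0 - 2 * Dlist [et] C3 z0)"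

lemma Z: "a > 0 \<Longrightarrow> F0 a z0 + u0 * Ku a z0 + q * (Kq a z0 + u0 * Kqu a z0) + g * Kg z0 + m * Km z0 + h * Kh z0 = 0"
  using P2_zero[of a z0 u0 q g m h] unfolding P2_u2_expand F0_def Ku_def Kq_def Kqu_def Kg_def Km_def Kh_def RR_def
  by (simp add: algebra_simps)

lemma Zs: "a > 0 \<Longrightarrow> F0 a z0 = 0" "a > 0 \<Longrightarrow> Km z0 = 0" "a > 0 \<Longrightarrow> Kh z0 = 0" "a > 0 \<Longrightarrow> Kg z0 = 0"
  "a > 0 \<Longrightarrow> Kq a z0 = 0" "a > 0 \<Longrightarrow> Ku a z0 = 0" "a > 0 \<Longrightarrow> Kqu a z0 = 0"
proof -
  assume a: "a > 0"
  note Z0 = Z[OF a, of z0]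
  show f: "F0 a z0 = 0" using Z0[of 0 0 0 0 0] by simp
  show "Km z0 = 0" using Z0[of 0 0 0 1 0] f by simp
  show "Kh z0 = 0" using Z0[of 0 0 0 0 1] f by simp
  show "Kg z0 = 0" using Z0[of 0 0 1 0 0] f by simp
  show q: "Kq a z0 = 0" using Z0[of 0 1 0 0 0] f by simp
  show u: "Ku a z0 = 0" using Z0[of 1 0 0 0 0] f by simp
  show "Kqu a z0 = 0" using Z0[of 1 1 0 0 0] f q u by simp
qed

lemma Ct_Ax: "Dlist [et] C3 z = 2 * Dlist [ex] A3 z"
  using Zs(2)[of 1 z] e0 unfolding Km_def by (simp add: algebra_simps)

lemma By_Ct: "Dlist [ey] B3 z = Dlist [et] C3 z"
  using Zs(3)[of 1 z] s20 unfolding Kh_def by (simp add: algebra_simps)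

end

locale symctx2 = symctx +
  assumes pn0: "p \<noteq> 0" and pm1: "p \<noteq> -1"
begin

lemma al_x: "Dlist [ex] al3 z = 0"
  using Zs(7)[of 1 z] pn0 pm1 unfolding Kqu_def by simp

lemma A_xx: "Dlist [ex,ex] A3 z = 0"
  using Zs(4)[of 1 z] e0 al_x[of z] unfolding Kg_def by simp

lemma zero_more: "Dlist [ex,ex] al3 z = 0" "Dlist [ex,ex,ex] al3 z = 0" "Dlist [ex,ex,ex] A3 z = 0"
  "Dlist [ex,ex,ex,ex] A3 z = 0"
proof -
  have f1: "Dlist [ex] al3 = (\<lambda>z. 0)" using al_x by auto
  have f2: "Dlist [ex,ex] A3 = (\<lambda>z. 0)" using A_xx by auto
  have "Dlist [ex,ex] al3 = Dlist [ex] (Dlist [ex] al3)" "Dlist [ex,ex,ex] al3 = Dlist [ex,ex] (Dlist [ex] al3)"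
    "Dlist [ex,ex,ex] A3 = Dlist [ex] (Dlist [ex,ex] A3)" "Dlist [ex,ex,ex,ex] A3 = Dlist [ex,ex] (Dlist [ex,ex] A3)"
    by (simp_all only: Dlist_append[symmetric]) simp_all
  then show "Dlist [ex,ex] al3 z = 0" "Dlist [ex,ex,ex] al3 z = 0" "Dlist [ex,ex,ex] A3 z = 0"
    "Dlist [ex,ex,ex,ex] A3 z = 0" using f1 f2 by simp_all
qed

lemma q_eq: "a > 0 \<Longrightarrow> - 2 * Dlist [ex] A3 z + (- (p + 1) * p * Dlist [ex] be3 z) * a powr (p - 1)
   + (- (p + 1) * 2 * Dlist [ex] A3 z - (p + 1) * p * (al3 z - Dlist [ex] A3 z)) * a powr p = 0"
proof -
  assume a: "a > 0"
  have ap: "a powr (p - 1) * a = a powr p" using a by (simp add: powr_diff field_simps)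
  have "Kq a z = 0" using Zs(5)[OF a] .
  then have "- RR a * (al3 z - 2 * Dlist [ex] A3 z)
          - (p + 1) * p * a powr (p - 1) * (Dlist [ex] be3 z + (al3 z - Dlist [ex] A3 z) * a)
          + RR a * (al3 z - 4 * Dlist [ex] A3 z) = 0"
    unfolding Kq_def using zero_more Ct_Ax[of z] by simp
  then have "- 2 * Dlist [ex] A3 z * RR a - (p + 1) * p * Dlist [ex] be3 z * a powr (p - 1)
     - (p + 1) * p * (al3 z - Dlist [ex] A3 z) * (a powr (p - 1) * a) = 0"
    by (simp add: algebra_simps)
  then show ?thesis unfolding ap RR_def by (simp add: algebra_simps)
qed

lemma wave_be: "Dlist [et,et] be3 z - (2 + p) * Dlist [ex,ex] be3 z - e * Dlist [ex,ex,ex,ex] be3 z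
     - s2 * Dlist [ey,ey] be3 z = 0"
  using Zs(1)[of 1 z] zero_more A_xx[of z] al_x[of z] unfolding F0_def RR_def by (simp add: algebra_simps)

lemma case_gen:
  assumes p1: "p \<noteq> 1"
  shows "Dlist [ex] A3 z = 0" "Dlist [ex] be3 z = 0" "al3 z = 0"
proof -
  have "- 2 * Dlist [ex] A3 z = 0 \<and> - (p + 1) * p * Dlist [ex] be3 z = 0 \<and>
        - (p + 1) * 2 * Dlist [ex] A3 z - (p + 1) * p * (al3 z - Dlist [ex] A3 z) = 0"
    by (rule pow3_indep[of "p - 1" p]) (use p1 pn0 q_eq in auto)
  then show "Dlist [ex] A3 z = 0" "Dlist [ex] be3 z = 0" "al3 z = 0"
    using pn0 pm1 by auto
qed

lemma case_one:
  assumes p1: "p = 1"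
  shows "al3 z = - Dlist [ex] A3 z" "Dlist [ex] be3 z = - Dlist [ex] A3 z"
proof -
  have "- 2 * Dlist [ex] A3 z + (- 2 * Dlist [ex] be3 z)
   + (- 4 * Dlist [ex] A3 z - 2 * (al3 z - Dlist [ex] A3 z)) * a = 0" if "a > 0" for a
    using q_eq[OF that, of z] that p1 by simp
  from this[of 1] this[of 2] show "al3 z = - Dlist [ex] A3 z" "Dlist [ex] be3 z = - Dlist [ex] A3 z"
    by (simp_all add: algebra_simps)
qed

end


lemma pt_dec: "((x,y,t)::R3) = (0,y,t) + x *\<^sub>R ex" "((0,y,t)::R3) = (0,0,t) + y *\<^sub>R ey"
  "((0,0,t)::R3) = 0 + t *\<^sub>R et"
  by (simp_all add: ex_def ey_def et_def)

lemma aff_step: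
  fixes F :: "R3 \<Rightarrow> real"
  assumes F: "smoothD F" and k: "pdir d F = (\<lambda>z. k)"
  shows "F (w + s *\<^sub>R d) = F w + s * k"
proof -
  have "F (w + s *\<^sub>R d) = F w + s * pdir d F w"
    by (rule affine_line) (use F smoothD_diff k in auto)
  then show ?thesis using k by simp
qed

lemma affine3:
  fixes F :: "R3 \<Rightarrow> real"
  assumes F: "smoothD F" and kx: "pdir ex F = (\<lambda>z. kx)" and ky: "pdir ey F = (\<lambda>z. ky)"
    and kt: "pdir et F = (\<lambda>z. kt)"
  shows "F (x,y,t) = F 0 + kx * x + ky * y + kt * t"
proof -
  have "F (x,y,t) = F (0,y,t) + x * kx" by (subst pt_dec(1)) (rule aff_step[OF F kx])
  also have "F (0,y,t) = F (0,0,t) + y * ky" by (subst pt_dec(2)) (rule aff_step[OF F ky])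
  also have "F (0,0,t) = F 0 + t * kt" by (subst pt_dec(3)) (rule aff_step[OF F kt])
  finally show ?thesis by (simp add: algebra_simps)
qed

lemma affine1:
  fixes F :: "R3 \<Rightarrow> real"
  assumes F: "smoothD F" and kx: "pdir ex F = (\<lambda>z. kx)"
  shows "F (x,y,t) = F (0,y,t) + kx * x"
  by (subst pt_dec(1)) (simp add: aff_step[OF F kx] mult.commute)

lemma inv3:
  fixes G :: "R3 \<Rightarrow> real"
  assumes "\<And>z s. G (z + s *\<^sub>R ex) = G z" "\<And>z s. G (z + s *\<^sub>R ey) = G z" "\<And>z s. G (z + s *\<^sub>R et) = G z"
  shows "G z = G 0"
proof -
  obtain x y t where z: "z = (x,y,t)" by (cases z) auto
  have "G (x,y,t) = G (0,y,t)" by (subst pt_dec(1)) (rule assms(1))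
  also have "\<dots> = G (0,0,t)" by (subst pt_dec(2)) (rule assms(2))
  also have "\<dots> = G 0" by (subst pt_dec(3)) (rule assms(3))
  finally show ?thesis using z by simp
qed

lemma inv_of_zero:
  fixes F :: "R3 \<Rightarrow> real"
  assumes F: "smoothD F" and k: "pdir d F = (\<lambda>z. 0)"
  shows "F (w + s *\<^sub>R d) = F w"
  using aff_step[OF F k] by simp

definition T2 :: "real \<times> real \<Rightarrow> R3" where "T2 yt = (0, fst yt, snd yt)"
lemma T2_linear: "linear T2" by (rule linearI) (auto simp: T2_def)
lemma T2_dirs: "T2 (0,1) = et" "T2 (1,0) = ey" by (simp_all add: T2_def et_def ey_def)

locale symctx3 = symctx2 +
  assumes s2sq: "s2 * s2 = 1"
begin

definition "c5 = pdir ex A3 0"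

lemma smd: "smoothD (pdir d A3)" "smoothD (pdir d B3)" "smoothD (pdir d C3)" "smoothD (pdir d be3)"
  using sm3 smoothD_pdir by auto

lemma Axx_fun: "pdir ex (pdir ex A3) = (\<lambda>z. 0)"
  using A_xx by (auto simp: fun_eq_iff)

lemma Ax_fun: "pdir ex A3 = (\<lambda>z. c5)"
proof -
  have "pdir ex A3 z = pdir ex A3 0" for z
  proof (rule inv3)
    show "pdir ex A3 (z + s *\<^sub>R ex) = pdir ex A3 z" for z s by (rule inv_of_zero[OF smd(1) Axx_fun])
    show "pdir ex A3 (z + s *\<^sub>R ey) = pdir ex A3 z" for z s
      by (rule pdir_inv) (rule inv_of_zero[OF sm3(1) struct3(1)])
    show "pdir ex A3 (z + s *\<^sub>R et) = pdir ex A3 z" for z s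
      by (rule pdir_inv) (rule inv_of_zero[OF sm3(1) struct3(2)])
  qed
  then show ?thesis by (auto simp: c5_def)
qed

lemma Ct_fun: "pdir et C3 = (\<lambda>z. 2 * c5)"
  using Ct_Ax Ax_fun by (auto simp: fun_eq_iff)

lemma By_fun: "pdir ey B3 = (\<lambda>z. 2 * c5)"
  using By_Ct Ct_fun by (auto simp: fun_eq_iff)

definition "KK = pdir et B3 0"

lemma G_fun: "pdir et B3 = (\<lambda>z. KK)"
proof -
  have "pdir et B3 z = pdir et B3 0" for z
  proof (rule inv3)
    show "pdir et B3 (z + s *\<^sub>R ex) = pdir et B3 z" for z s
      by (rule pdir_inv) (rule inv_of_zero[OF sm3(2) struct3(3)])
    show "pdir et B3 (z + s *\<^sub>R ey) = pdir et B3 z" for z s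
      by (rule affine_pdir_inv) (rule aff_step[OF sm3(2) By_fun])
    have "pdir ey C3 (z + s *\<^sub>R et) = pdir ey C3 z" for z s
      by (rule affine_pdir_inv) (rule aff_step[OF sm3(3) Ct_fun])
    then show "pdir et B3 (z + s *\<^sub>R et) = pdir et B3 z" for z s
      by (simp add: BC3)
  qed
  then show ?thesis by (auto simp: KK_def)
qed

lemma Cy_fun: "pdir ey C3 = (\<lambda>z. s2 * KK)"
proof -
  have k: "KK = s2 * pdir ey C3 z" for z using BC3[of z] G_fun by simp
  have "pdir ey C3 z = s2 * KK" for z
  proof -
    have "s2 * KK = (s2 * s2) * pdir ey C3 z" using k[of z] by simp
    then show ?thesis using s2sq by simp
  qed
  then show ?thesis by auto
qed

lemma al_fun: "al3 z = - c5"
  using case_gen(3) case_gen(1) case_one(1) Ax_fun by (cases "p = 1") auto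

lemma bex_fun: "pdir ex be3 = (\<lambda>z. - c5)"
proof -
  have "pdir ex be3 z = - c5" for z
    using case_gen(2) case_gen(1) case_one(2) Ax_fun by (cases "p = 1") auto
  then show ?thesis by auto
qed

lemma c5_gen: "p \<noteq> 1 \<Longrightarrow> c5 = 0"
  using case_gen(1)[of 0] by (simp add: c5_def)

lemma forms:
  "A3 (x,y,t) = A3 0 + c5 * x"
  "B3 (x,y,t) = B3 0 + 2 * c5 * y + KK * t"
  "C3 (x,y,t) = C3 0 + s2 * KK * y + 2 * c5 * t"
  "be3 (x,y,t) = be3 (0,y,t) - c5 * x"
  using affine3[OF sm3(1) Ax_fun struct3(1,2)] affine3[OF sm3(2) struct3(3) By_fun G_fun]
    affine3[OF sm3(3) struct3(4) Cy_fun Ct_fun] affine1[OF sm3(5) bex_fun]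
  by (simp_all add: algebra_simps)

definition "PP = (\<lambda>yt. be3 (T2 yt))"

lemma wave: "wave_sol s2 PP"
proof -
  have sm: "smoothD PP" unfolding PP_def by (rule lin_smoothD[OF T2_linear sm3(5)])
  have bxx: "Dlist [ex,ex] be3 z = 0" "Dlist [ex,ex,ex,ex] be3 z = 0" for z
    using bex_fun by simp_all
  have "Dlist [(0,1),(0,1)] PP z - s2 * Dlist [(1,0),(1,0)] PP z = 0" for z
    unfolding PP_def lin_Dlist[OF T2_linear] using wave_be[of "T2 z"] bxx by (simp add: T2_dirs)
  then show ?thesis unfolding wave_sol_def using smoothD_smoothC[OF sm] by blast
qed

lemma X_form: "X = vadd (vscale (A3 0) gen1) (vadd (vscale (B3 0) gen2) (vadd (vscale (C3 0) gen3)
     (vadd (vscale (s2 * KK) (gen4 s2)) (vadd (gen5 PP) (vscale c5 gen_scal)))))"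
proof -
  have fx: "A3 (pr3 w) = A3 0 + c5 * fst w" for w
    using forms(1)[of "fst w" "fst (snd w)" "fst (snd (snd w))"] by (simp add: pr3_def)
  have fy: "B3 (pr3 w) = B3 0 + 2 * c5 * fst (snd w) + KK * fst (snd (snd w))" for w
    using forms(2)[of "fst w" "fst (snd w)" "fst (snd (snd w))"] by (simp add: pr3_def)
  have ft: "C3 (pr3 w) = C3 0 + s2 * KK * fst (snd w) + 2 * c5 * fst (snd (snd w))" for w
    using forms(3)[of "fst w" "fst (snd w)" "fst (snd (snd w))"] by (simp add: pr3_def)
  have fe: "be3 (pr3 w) = PP (fst (snd w), fst (snd (snd w))) - c5 * fst w" for w
    using forms(4)[of "fst w" "fst (snd w)" "fst (snd (snd w))"] by (simp add: pr3_def PP_def T2_def)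
  have "s2 * KK * (s2 * t) = KK * t" for t using s2sq by (simp add: algebra_simps)
  then show ?thesis
    apply (subst X_eq)
    apply (simp add: mkX_def vadd_def vscale_def gen1_def gen2_def gen3_def gen4_def gen5_def gen_scal_def
        xiX_def xiY_def tauT_def etaV_def fx fy ft fe al_fun vv_def fun_eq_iff split: prod.splits)
    apply (simp add: algebra_simps s2sq)
    done
qed

end


lemma DERIV_line:
  fixes F :: "'a::real_normed_vector \<Rightarrow> real"
  assumes dF: "\<And>w. F differentiable (at w)"
  shows "DERIV (\<lambda>s. F (w + s *\<^sub>R d)) s0 :> pdir d F (w + s0 *\<^sub>R d)"
proof -
  have l: "(\<lambda>s. w + s *\<^sub>R d) differentiable (at s0)"
    by (rule differentiable_add[OF differentiable_const differentiable_scaleR[OF differentiable_ident differentiable_const]])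
  have "L d F w differentiable (at s0)"
    unfolding L_def using dF l by (metis differentiable_compose)
  then have "DERIV (L d F w) s0 :> deriv (L d F w) s0"
    by (simp add: DERIV_deriv_iff_real_differentiable)
  then show ?thesis using pdir_line[of d F w s0] by (simp add: L_def)
qed

lemma mixed_mvt:
  fixes u :: "'a::real_normed_vector \<Rightarrow> real"
  assumes du: "\<And>w. u differentiable (at w)" and d1: "\<And>w. pdir d1 u differentiable (at w)"
    and h: "h > 0"
  shows "\<exists>a b. 0 < a \<and> a < h \<and> 0 < b \<and> b < h \<and>
     u (z + h *\<^sub>R d1 + h *\<^sub>R d2) - u (z + h *\<^sub>R d1) - u (z + h *\<^sub>R d2) + u z
       = h * h * pdir d2 (pdir d1 u) (z + a *\<^sub>R d1 + b *\<^sub>R d2)"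
proof -
  define \<phi> where "\<phi> s = u (z + h *\<^sub>R d2 + s *\<^sub>R d1) - u (z + s *\<^sub>R d1)" for s
  have D: "DERIV \<phi> s :> pdir d1 u (z + h *\<^sub>R d2 + s *\<^sub>R d1) - pdir d1 u (z + s *\<^sub>R d1)" for s
    unfolding \<phi>_def by (intro DERIV_diff DERIV_line du)
  have "\<exists>a. 0 < a \<and> a < h \<and> \<phi> h - \<phi> 0 = (h - 0) * (pdir d1 u (z + h *\<^sub>R d2 + a *\<^sub>R d1) - pdir d1 u (z + a *\<^sub>R d1))"
    by (rule MVT2[OF h]) (rule D)
  then obtain a where a: "0 < a" "a < h"
    and eq1: "\<phi> h - \<phi> 0 = (h - 0) * (pdir d1 u (z + h *\<^sub>R d2 + a *\<^sub>R d1) - pdir d1 u (z + a *\<^sub>R d1))"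
    by blast
  define \<psi> where "\<psi> r = pdir d1 u (z + a *\<^sub>R d1 + r *\<^sub>R d2)" for r
  have D2: "DERIV \<psi> r :> pdir d2 (pdir d1 u) (z + a *\<^sub>R d1 + r *\<^sub>R d2)" for r
    unfolding \<psi>_def by (intro DERIV_line d1)
  have "\<exists>b. 0 < b \<and> b < h \<and> \<psi> h - \<psi> 0 = (h - 0) * pdir d2 (pdir d1 u) (z + a *\<^sub>R d1 + b *\<^sub>R d2)"
    by (rule MVT2[OF h]) (rule D2)
  then obtain b where b: "0 < b" "b < h"
    and eq2: "\<psi> h - \<psi> 0 = (h - 0) * pdir d2 (pdir d1 u) (z + a *\<^sub>R d1 + b *\<^sub>R d2)"
    by blast
  have "u (z + h *\<^sub>R d1 + h *\<^sub>R d2) - u (z + h *\<^sub>R d1) - u (z + h *\<^sub>R d2) + u z = \<phi> h - \<phi> 0"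
    unfolding \<phi>_def by (simp add: algebra_simps)
  also have "\<dots> = h * (\<psi> h - \<psi> 0)" using eq1 unfolding \<psi>_def by (simp add: algebra_simps)
  also have "\<dots> = h * h * pdir d2 (pdir d1 u) (z + a *\<^sub>R d1 + b *\<^sub>R d2)" using eq2 by simp
  finally show ?thesis using a b by blast
qed

lemma seq_to_z:
  fixes z d1 d2 :: "'a::real_normed_vector"
  assumes "\<And>n. 0 < a n \<and> a n < 1 / real (Suc n)" "\<And>n. 0 < b n \<and> b n < 1 / real (Suc n)"
  shows "(\<lambda>n. z + a n *\<^sub>R d1 + b n *\<^sub>R d2) \<longlonglongrightarrow> z"
proof -
  have l: "(\<lambda>n. 1 / real (Suc n)) \<longlonglongrightarrow> 0"
    using LIMSEQ_inverse_real_of_nat by (simp add: inverse_eq_divide)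
  have "a \<longlonglongrightarrow> 0"
    by (rule tendsto_sandwich[OF _ _ tendsto_const l]) (use assms(1) in \<open>auto intro!: always_eventually less_imp_le\<close>)
  moreover have "b \<longlonglongrightarrow> 0"
    by (rule tendsto_sandwich[OF _ _ tendsto_const l]) (use assms(2) in \<open>auto intro!: always_eventually less_imp_le\<close>)
  ultimately have "(\<lambda>n. z + a n *\<^sub>R d1 + b n *\<^sub>R d2) \<longlonglongrightarrow> z + 0 *\<^sub>R d1 + 0 *\<^sub>R d2"
    by (intro tendsto_intros)
  then show ?thesis by simp
qed

lemma clairaut:
  fixes u :: "'a::euclidean_space \<Rightarrow> real"
  assumes u: "smoothD u"
  shows "pdir d2 (pdir d1 u) z = pdir d1 (pdir d2 u) z"
proof -
  have du: "\<And>w. u differentiable (at w)" using u smoothD_diff by blast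
  have d1: "\<And>w. pdir d1 u differentiable (at w)" and d2: "\<And>w. pdir d2 u differentiable (at w)"
    using u smoothD_pdir smoothD_diff by blast+
  have c12: "isCont (pdir d2 (pdir d1 u)) w" "isCont (pdir d1 (pdir d2 u)) w" for w
    by (rule differentiable_imp_continuous_within, use u smoothD_pdir smoothD_diff in blast)+
  have "\<forall>n. \<exists>q::real\<times>real\<times>real\<times>real. (0 < fst q \<and> fst q < 1 / real (Suc n)) \<and> (0 < fst (snd q) \<and> fst (snd q) < 1 / real (Suc n)) \<and>
           (0 < fst (snd (snd q)) \<and> fst (snd (snd q)) < 1 / real (Suc n)) \<and> (0 < snd (snd (snd q)) \<and> snd (snd (snd q)) < 1 / real (Suc n)) \<and>
           pdir d2 (pdir d1 u) (z + fst q *\<^sub>R d1 + fst (snd q) *\<^sub>R d2) = pdir d1 (pdir d2 u) (z + snd (snd (snd q)) *\<^sub>R d1 + fst (snd (snd q)) *\<^sub>R d2)"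
  proof
    fix n
    let ?h = "1 / real (Suc n)"
    have h: "?h > 0" by simp
    obtain a b where ab: "0 < a" "a < ?h" "0 < b" "b < ?h"
      and e1: "u (z + ?h *\<^sub>R d1 + ?h *\<^sub>R d2) - u (z + ?h *\<^sub>R d1) - u (z + ?h *\<^sub>R d2) + u z
               = ?h * ?h * pdir d2 (pdir d1 u) (z + a *\<^sub>R d1 + b *\<^sub>R d2)"
      using mixed_mvt[OF du d1 h] by blast
    obtain a' b' where ab': "0 < a'" "a' < ?h" "0 < b'" "b' < ?h"
      and e2: "u (z + ?h *\<^sub>R d2 + ?h *\<^sub>R d1) - u (z + ?h *\<^sub>R d2) - u (z + ?h *\<^sub>R d1) + u z
               = ?h * ?h * pdir d1 (pdir d2 u) (z + a' *\<^sub>R d2 + b' *\<^sub>R d1)"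
      using mixed_mvt[OF du d2 h] by blast
    have "?h * ?h * pdir d2 (pdir d1 u) (z + a *\<^sub>R d1 + b *\<^sub>R d2) = ?h * ?h * pdir d1 (pdir d2 u) (z + a' *\<^sub>R d2 + b' *\<^sub>R d1)"
      using e1 e2 by (simp add: algebra_simps)
    moreover have hh: "?h * ?h \<noteq> 0" by simp
    ultimately have "pdir d2 (pdir d1 u) (z + a *\<^sub>R d1 + b *\<^sub>R d2) = pdir d1 (pdir d2 u) (z + a' *\<^sub>R d2 + b' *\<^sub>R d1)"
      by (simp only: mult_left_cancel[OF hh])
    moreover have "z + a' *\<^sub>R d2 + b' *\<^sub>R d1 = z + b' *\<^sub>R d1 + a' *\<^sub>R d2" by (simp add: algebra_simps)
    ultimately have "pdir d2 (pdir d1 u) (z + a *\<^sub>R d1 + b *\<^sub>R d2) = pdir d1 (pdir d2 u) (z + b' *\<^sub>R d1 + a' *\<^sub>R d2)"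
      by simp
    then show "\<exists>q::real\<times>real\<times>real\<times>real. (0 < fst q \<and> fst q < ?h) \<and> (0 < fst (snd q) \<and> fst (snd q) < ?h) \<and>
           (0 < fst (snd (snd q)) \<and> fst (snd (snd q)) < ?h) \<and> (0 < snd (snd (snd q)) \<and> snd (snd (snd q)) < ?h) \<and>
           pdir d2 (pdir d1 u) (z + fst q *\<^sub>R d1 + fst (snd q) *\<^sub>R d2) = pdir d1 (pdir d2 u) (z + snd (snd (snd q)) *\<^sub>R d1 + fst (snd (snd q)) *\<^sub>R d2)"
      using ab ab' by (intro exI[of _ "(a, b, a', b')"]) simp
  qed
  then obtain f where f: "\<And>n. (0 < fst (f n) \<and> fst (f n) < 1 / real (Suc n)) \<and> (0 < fst (snd (f n)) \<and> fst (snd (f n)) < 1 / real (Suc n)) \<and>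
           (0 < fst (snd (snd (f n))) \<and> fst (snd (snd (f n))) < 1 / real (Suc n)) \<and> (0 < snd (snd (snd (f n))) \<and> snd (snd (snd (f n))) < 1 / real (Suc n)) \<and>
           pdir d2 (pdir d1 u) (z + fst (f n) *\<^sub>R d1 + fst (snd (f n)) *\<^sub>R d2) = pdir d1 (pdir d2 u) (z + snd (snd (snd (f n))) *\<^sub>R d1 + fst (snd (snd (f n))) *\<^sub>R d2)"
    using choice[of "\<lambda>n q. (0 < fst q \<and> fst q < 1 / real (Suc n)) \<and> (0 < fst (snd q) \<and> fst (snd q) < 1 / real (Suc n)) \<and>
           (0 < fst (snd (snd q)) \<and> fst (snd (snd q)) < 1 / real (Suc n)) \<and> (0 < snd (snd (snd q)) \<and> snd (snd (snd q)) < 1 / real (Suc n)) \<and>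
           pdir d2 (pdir d1 u) (z + fst q *\<^sub>R d1 + fst (snd q) *\<^sub>R d2) = pdir d1 (pdir d2 u) (z + snd (snd (snd q)) *\<^sub>R d1 + fst (snd (snd q)) *\<^sub>R d2)"]
    by blast
  define a where "a n = fst (f n)" for n
  define b where "b n = fst (snd (f n))" for n
  define a' where "a' n = fst (snd (snd (f n)))" for n
  define b' where "b' n = snd (snd (snd (f n)))" for n
  have P: "(0 < a n \<and> a n < 1 / real (Suc n)) \<and> (0 < b n \<and> b n < 1 / real (Suc n)) \<and>
           (0 < a' n \<and> a' n < 1 / real (Suc n)) \<and> (0 < b' n \<and> b' n < 1 / real (Suc n)) \<and>
           pdir d2 (pdir d1 u) (z + a n *\<^sub>R d1 + b n *\<^sub>R d2) = pdir d1 (pdir d2 u) (z + b' n *\<^sub>R d1 + a' n *\<^sub>R d2)" for n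
    unfolding a_def b_def a'_def b'_def using f[of n] by blast
  have t1: "(\<lambda>n. pdir d2 (pdir d1 u) (z + a n *\<^sub>R d1 + b n *\<^sub>R d2)) \<longlonglongrightarrow> pdir d2 (pdir d1 u) z"
    by (rule isCont_tendsto_compose[OF c12(1) seq_to_z]) (use P in auto)
  have t2: "(\<lambda>n. pdir d1 (pdir d2 u) (z + b' n *\<^sub>R d1 + a' n *\<^sub>R d2)) \<longlonglongrightarrow> pdir d1 (pdir d2 u) z"
    by (rule isCont_tendsto_compose[OF c12(2) seq_to_z]) (use P in auto)
  have "(\<lambda>n. pdir d2 (pdir d1 u) (z + a n *\<^sub>R d1 + b n *\<^sub>R d2)) = (\<lambda>n. pdir d1 (pdir d2 u) (z + b' n *\<^sub>R d1 + a' n *\<^sub>R d2))"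
    using P by auto
  then show ?thesis using t1 t2 LIMSEQ_unique by simp
qed


definition T3 :: "R3 \<Rightarrow> real \<times> real" where "T3 z = (fst (snd z), snd (snd z))"
lemma T3_linear: "linear T3" by (rule linearI) (auto simp: T3_def)

context
  fixes c1 c2 c3 c4 c5 s2 :: real and P :: "real \<times> real \<Rightarrow> real"
begin

definition "aE = (\<lambda>z::R3. c1 + c5 * fst z)"
definition "bE = (\<lambda>z::R3. c2 + c4 * s2 * snd (snd z) + 2 * c5 * fst (snd z))"
definition "cE = (\<lambda>z::R3. c3 + c4 * fst (snd z) + 2 * c5 * snd (snd z))"
definition "alE = (\<lambda>z::R3. - c5)"
definition "beE = (\<lambda>z::R3. P (T3 z) + (- c5) * fst z)"

lemma XE: "vadd (vscale c1 gen1) (vadd (vscale c2 gen2) (vadd (vscale c3 gen3)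
     (vadd (vscale c4 (gen4 s2)) (vadd (gen5 P) (vscale c5 gen_scal))))) = mkX aE bE cE alE beE"
  by (simp add: mkX_def vadd_def vscale_def gen1_def gen2_def gen3_def gen4_def gen5_def gen_scal_def
        xiX_def xiY_def tauT_def etaV_def aE_def bE_def cE_def alE_def beE_def T3_def pr3_def vv_def
        fun_eq_iff split: prod.splits) (simp add: algebra_simps)

lemma smE3: "smoothC P \<Longrightarrow> smoothD aE \<and> smoothD bE \<and> smoothD cE \<and> smoothD alE \<and> smoothD beE"
proof -
  assume P: "smoothC P"
  have "aE \<in> P3" "bE \<in> P3" "cE \<in> P3" unfolding aE_def bE_def cE_def by (intro P3_intros)+
  moreover have "smoothD alE" unfolding alE_def by (rule smoothD_const)
  moreover have "smoothD beE" unfolding beE_def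
    by (intro smoothD_add lin_smoothD[OF T3_linear] smoothC_smoothD[OF P] P3_smoothD P3_intros)
  ultimately show ?thesis using P3_smoothD by blast
qed

lemma LE: "L ex aE z = (\<lambda>s. c1 + c5 * fst z + c5 * s)" "L ey aE z = (\<lambda>s. c1 + c5 * fst z)"
  "L et aE z = (\<lambda>s. c1 + c5 * fst z)"
  "L ex bE z = (\<lambda>s. bE z)" "L ey bE z = (\<lambda>s. bE z + 2 * c5 * s)" "L et bE z = (\<lambda>s. bE z + c4 * s2 * s)"
  "L ex cE z = (\<lambda>s. cE z)" "L ey cE z = (\<lambda>s. cE z + c4 * s)" "L et cE z = (\<lambda>s. cE z + 2 * c5 * s)"
  "L ex beE z = (\<lambda>s. P (T3 z) - c5 * fst z - c5 * s)"
  "L ey beE z = (\<lambda>s. L (1,0) P (T3 z) s - c5 * fst z)"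
  "L et beE z = (\<lambda>s. L (0,1) P (T3 z) s - c5 * fst z)"
  by (auto simp: L_def aE_def bE_def cE_def beE_def ex_def ey_def et_def T3_def algebra_simps zero_prod_def[symmetric])

lemma structE: "pdir ey aE = (\<lambda>z. 0)" "pdir et aE = (\<lambda>z. 0)" "pdir ex bE = (\<lambda>z. 0)" "pdir ex cE = (\<lambda>z. 0)"
proof -
  have "pdir ey aE z = 0" "pdir et aE z = 0" "pdir ex bE z = 0" "pdir ex cE z = 0" for z
    using Dlist1[of ey aE z] Dlist1[of et aE z] Dlist1[of ex bE z] Dlist1[of ex cE z]
    by (simp_all add: LE)
  then show "pdir ey aE = (\<lambda>z. 0)" "pdir et aE = (\<lambda>z. 0)" "pdir ex bE = (\<lambda>z. 0)" "pdir ex cE = (\<lambda>z. 0)"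
    by auto
qed

lemma alE_jets: "Dlist (d # ds) alE z = 0"
proof -
  have "Dlist ds alE = (\<lambda>z. if ds = [] then - c5 else 0)" for ds
    unfolding alE_def by (induction ds) simp_all
  then show ?thesis by simp
qed

lemma jetsE:
  assumes P: "smoothC P"
  shows "Dlist [ex] aE z = c5" "Dlist [ex,ex] aE z = 0" "Dlist [ex,ex,ex] aE z = 0" "Dlist [ex,ex,ex,ex] aE z = 0"
  "Dlist [et] bE z = c4 * s2" "Dlist [et,et] bE z = 0" "Dlist [ey] bE z = 2 * c5" "Dlist [ey,ey] bE z = 0"
  "Dlist [et] cE z = 2 * c5" "Dlist [et,et] cE z = 0" "Dlist [ey] cE z = c4" "Dlist [ey,ey] cE z = 0"
  "Dlist [ex] beE z = - c5" "Dlist [ex,ex] beE z = 0" "Dlist [ex,ex,ex,ex] beE z = 0"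
  "Dlist [et,et] beE z = Dlist [(0,1),(0,1)] P (T3 z)" "Dlist [ey,ey] beE z = Dlist [(1,0),(1,0)] P (T3 z)"
proof -
  have sP: "smoothD P" using P smoothC_smoothD by blast
  show "Dlist [ex] aE z = c5" "Dlist [ex,ex] aE z = 0" "Dlist [ex,ex,ex] aE z = 0" "Dlist [ex,ex,ex,ex] aE z = 0"
    "Dlist [et] bE z = c4 * s2" "Dlist [et,et] bE z = 0" "Dlist [ey] bE z = 2 * c5" "Dlist [ey,ey] bE z = 0"
    "Dlist [et] cE z = 2 * c5" "Dlist [et,et] cE z = 0" "Dlist [ey] cE z = c4" "Dlist [ey,ey] cE z = 0"
    "Dlist [ex] beE z = - c5" "Dlist [ex,ex] beE z = 0" "Dlist [ex,ex,ex,ex] beE z = 0"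
    by (simp_all only: Dlist1 Dlist2 Dlist3 Dlist4 LE) (simp_all add: sP)
  show "Dlist [et,et] beE z = Dlist [(0,1),(0,1)] P (T3 z)" "Dlist [ey,ey] beE z = Dlist [(1,0),(1,0)] P (T3 z)"
    by (simp_all only: Dlist2 LE) (simp_all add: sP)
qed

lemma conv_sym:
  assumes P: "wave_sol s2 P" and pc: "p = 1 \<or> c5 = 0"
  shows "is_point_symmetry p s2 e (vadd (vscale c1 gen1) (vadd (vscale c2 gen2) (vadd (vscale c3 gen3)
     (vadd (vscale c4 (gen4 s2)) (vadd (gen5 P) (vscale c5 gen_scal))))))"
  unfolding is_point_symmetry_def
proof (intro allI impI)
  fix u z0
  assume su: "smoothC u" and ux: "Dlist [ex] u z0 > 0" and D: "Delta p s2 e u z0 = 0"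
  have sP: "smoothC P" and wv: "Dlist [(0,1),(0,1)] P (T3 z0) - s2 * Dlist [(1,0),(1,0)] P (T3 z0) = 0"
    using P unfolding wave_sol_def by blast+
  have sm: "smoothD u" using su smoothC_smoothD by blast
  note sE = smE3[OF sP]
  have pd: "prDelta p s2 e (vadd (vscale c1 gen1) (vadd (vscale c2 gen2) (vadd (vscale c3 gen3)
     (vadd (vscale c4 (gen4 s2)) (vadd (gen5 P) (vscale c5 gen_scal)))))) u z0 = P2 p s2 e aE bE cE alE beE u z0"
    unfolding XE using sE sm by (intro P2_formula structE) auto
  have cl: "Dlist [et,ey] u z0 = Dlist [ey,et] u z0"
    using clairaut[OF sm, of ey et z0] by simp
  have utt: "Dlist [et,et] u z0 = Dlist [ex,ex] u z0 + (p + 1) * Dlist [ex] u z0 powr p * Dlist [ex,ex] u z0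
      + e * Dlist [ex,ex,ex,ex] u z0 + s2 * Dlist [ey,ey] u z0"
    using D unfolding Delta_def by (simp only: algebra_simps)
  have wv': "Dlist [(0,1),(0,1)] P (T3 z0) = s2 * Dlist [(1,0),(1,0)] P (T3 z0)" using wv by simp
  have "P2 p s2 e aE bE cE alE beE u z0 = c5 * Dlist [ex,ex] u z0 *
      (- 2 * (1 + (p + 1) * Dlist [ex] u z0 powr p) + (p + 1) * p * Dlist [ex] u z0 powr (p - 1) * (1 + 2 * Dlist [ex] u z0))"
    unfolding P2_def Let_def
    apply (simp only: jetsE[OF sP] alE_jets cl utt wv')
    apply (simp add: alE_def algebra_simps)
    done
  moreover have "c5 * Dlist [ex,ex] u z0 *
      (- 2 * (1 + (p + 1) * Dlist [ex] u z0 powr p) + (p + 1) * p * Dlist [ex] u z0 powr (p - 1) * (1 + 2 * Dlist [ex] u z0)) = 0"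
    using pc ux by (auto simp: algebra_simps)
  ultimately show "prDelta p s2 e (vadd (vscale c1 gen1) (vadd (vscale c2 gen2) (vadd (vscale c3 gen3)
     (vadd (vscale c4 (gen4 s2)) (vadd (gen5 P) (vscale c5 gen_scal)))))) u z0 = 0"
    using pd by simp
qed

end


lemma gen5_0: "vadd (gen5 P) (vscale 0 gen_scal) = gen5 P"
  by (simp add: vadd_def vscale_def gen5_def gen_scal_def xiX_def xiY_def tauT_def etaV_def fun_eq_iff split: prod.splits)

lemma fwd:
  assumes "p \<noteq> 0" "p \<noteq> -1" "s2 \<in> {1, -1}" "e \<in> {1, -1}" "smooth_vf X" "is_point_symmetry p s2 e X"
  shows "\<exists>c1 c2 c3 c4 c5 P. wave_sol s2 P \<and>
     X = vadd (vscale c1 gen1) (vadd (vscale c2 gen2) (vadd (vscale c3 gen3)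
           (vadd (vscale c4 (gen4 s2)) (vadd (gen5 P) (vscale c5 gen_scal))))) \<and> (p \<noteq> 1 \<longrightarrow> c5 = 0)"
proof -
  interpret symctx3 p s2 e X
    by unfold_locales (use assms in auto)
  show ?thesis using X_form wave c5_gen by blast
qed

theorem theorem3p2:
  fixes p s2 e :: real
  assumes "p \<noteq> 0" and "p \<noteq> -1" and "s2 \<in> {1, -1}" and "e \<in> {1, -1}"
  shows "(p \<noteq> 1 \<longrightarrow> (\<forall>X. smooth_vf X \<longrightarrow>
            (is_point_symmetry p s2 e X \<longleftrightarrow>
              (\<exists>c1 c2 c3 c4 P. wave_sol s2 P \<and>
                 X = vadd (vscale c1 gen1) (vadd (vscale c2 gen2) (vadd (vscale c3 gen3)
                       (vadd (vscale c4 (gen4 s2)) (gen5 P))))))))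
       \<and> (p = 1 \<longrightarrow> (\<forall>X. smooth_vf X \<longrightarrow>
            (is_point_symmetry p s2 e X \<longleftrightarrow>
              (\<exists>c1 c2 c3 c4 c5 P. wave_sol s2 P \<and>
                 X = vadd (vscale c1 gen1) (vadd (vscale c2 gen2) (vadd (vscale c3 gen3)
                       (vadd (vscale c4 (gen4 s2)) (vadd (gen5 P) (vscale c5 gen_scal)))))))))"
proof (intro conjI impI allI iffI)
  fix X assume p1: "p \<noteq> 1" and sX: "smooth_vf X" and sy: "is_point_symmetry p s2 e X"
  then obtain c1 c2 c3 c4 c5 P where "wave_sol s2 P" "X = vadd (vscale c1 gen1) (vadd (vscale c2 gen2) (vadd (vscale c3 gen3)
           (vadd (vscale c4 (gen4 s2)) (vadd (gen5 P) (vscale c5 gen_scal)))))" "c5 = 0"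
    using fwd[OF assms sX sy] by blast
  then show "\<exists>c1 c2 c3 c4 P. wave_sol s2 P \<and>
                 X = vadd (vscale c1 gen1) (vadd (vscale c2 gen2) (vadd (vscale c3 gen3)
                       (vadd (vscale c4 (gen4 s2)) (gen5 P))))"
    using gen5_0 by metis
next
  fix X assume p1: "p \<noteq> 1" and sX: "smooth_vf X"
  assume "\<exists>c1 c2 c3 c4 P. wave_sol s2 P \<and>
                 X = vadd (vscale c1 gen1) (vadd (vscale c2 gen2) (vadd (vscale c3 gen3)
                       (vadd (vscale c4 (gen4 s2)) (gen5 P))))"
  then obtain c1 c2 c3 c4 P where w: "wave_sol s2 P" and X: "X = vadd (vscale c1 gen1) (vadd (vscale c2 gen2) (vadd (vscale c3 gen3)
                       (vadd (vscale c4 (gen4 s2)) (gen5 P))))" by blast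
  have "is_point_symmetry p s2 e (vadd (vscale c1 gen1) (vadd (vscale c2 gen2) (vadd (vscale c3 gen3)
     (vadd (vscale c4 (gen4 s2)) (vadd (gen5 P) (vscale 0 gen_scal))))))"
    by (rule conv_sym[OF w]) simp
  then show "is_point_symmetry p s2 e X" using X gen5_0 by simp
next
  fix X assume p1: "p = 1" and sX: "smooth_vf X" and sy: "is_point_symmetry p s2 e X"
  then show "\<exists>c1 c2 c3 c4 c5 P. wave_sol s2 P \<and>
                 X = vadd (vscale c1 gen1) (vadd (vscale c2 gen2) (vadd (vscale c3 gen3)
                       (vadd (vscale c4 (gen4 s2)) (vadd (gen5 P) (vscale c5 gen_scal)))))"
    using fwd[OF assms sX sy] by blast
next
  fix X assume p1: "p = 1" and sX: "smooth_vf X"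
  assume "\<exists>c1 c2 c3 c4 c5 P. wave_sol s2 P \<and>
                 X = vadd (vscale c1 gen1) (vadd (vscale c2 gen2) (vadd (vscale c3 gen3)
                       (vadd (vscale c4 (gen4 s2)) (vadd (gen5 P) (vscale c5 gen_scal)))))"
  then obtain c1 c2 c3 c4 c5 P where w: "wave_sol s2 P" and X: "X = vadd (vscale c1 gen1) (vadd (vscale c2 gen2) (vadd (vscale c3 gen3)
                       (vadd (vscale c4 (gen4 s2)) (vadd (gen5 P) (vscale c5 gen_scal)))))" by blast
  show "is_point_symmetry p s2 e X" unfolding X by (rule conv_sym[OF w]) (simp add: p1)
qed


end
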